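(* Let $Z$ be an $n\times n$ positive semidefinite complex matrix with eigenvalues $r_1,\dots,r_n$, and let $U$ be an $n\times n$ unitary matrix such that $I-UZ$ is nonsingular. Then $$\prod_{k=1}^n\frac{|1-r_k|}{1+r_k}\le \frac{|\det(I-Z^2)|}{|\det(I-UZ)|^2},$$ with equality if and only if $1$ is an eigenvalue of $Z$, or the eigenvalues of $UZ$ (with multiplicities) are $-r_1,\dots,-r_n$. If both $Z$ and $I-Z$ are nonsingular and $U\neq -I$, this inequality is strict. Moreover, if $0\le r_k<1$ for all $k=1,\dots,n$, then $$\frac{\det(I-Z^2)}{|\det(I-UZ)|^2}\le \prod_{k=1}^n\frac{1+r_k}{1-r_k},$$ with equality if and only if the eigenvalues of $UZ$ (with multiplicities) are $r_1,\dots,r_n$. If in addition $Z$ is nonsingular and $U\neq I$, this inequality is strict.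
   Context: $I$ denotes the $n\times n$ identity matrix. *)

theory Defs
  imports "Jordan_Normal_Form.Char_Poly" "Jordan_Normal_Form.Conjugate"
begin

definition mat_adj :: "complex mat \<Rightarrow> complex mat" where
  "mat_adj A = mat (dim_col A) (dim_row A) (\<lambda>(i,j). cnj (A $$ (j,i)))"

definition unitary_mat :: "nat \<Rightarrow> complex mat \<Rightarrow> bool" where
  "unitary_mat n U \<longleftrightarrow> U \<in> carrier_mat n n \<and> mat_adj U * U = 1\<^sub>m n"

definition psd_mat :: "nat \<Rightarrow> complex mat \<Rightarrow> bool" where
  "psd_mat n Z \<longleftrightarrow> Z \<in> carrier_mat n n \<and> mat_adj Z = Z \<and>
     (\<forall>v \<in> carrier_vec n. Im (conjugate v \<bullet> (Z *\<^sub>v v)) = 0 \<and> Re (conjugate v \<bullet> (Z *\<^sub>v v)) \<ge> 0)"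

end

theory Submission
  imports Defs "Jordan_Normal_Form.Schur_Decomposition"
begin

definition dg :: "nat \<Rightarrow> (nat \<Rightarrow> complex) \<Rightarrow> complex mat" where
  "dg n f = mat n n (\<lambda>(i,j). if i = j then f i else 0)"

definition vn2 :: "complex vec \<Rightarrow> real" where
  "vn2 v = (\<Sum>i<dim_vec v. (cmod (v$i))^2)"

lemma adj_dim[simp]: "dim_row (mat_adj A) = dim_col A" "dim_col (mat_adj A) = dim_row A"
  by (auto simp: mat_adj_def)

lemma adj_carrier[simp]: "A \<in> carrier_mat m n \<Longrightarrow> mat_adj A \<in> carrier_mat n m"
  by (auto simp: mat_adj_def)

lemma adj_index[simp]: "i < dim_col A \<Longrightarrow> j < dim_row A \<Longrightarrow> mat_adj A $$ (i,j) = cnj (A $$ (j,i))"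
  by (auto simp: mat_adj_def)

lemma adj_adj[simp]: "mat_adj (mat_adj A) = A"
  by (rule eq_matI, auto)

lemma adj_mult: assumes "A \<in> carrier_mat m k" "B \<in> carrier_mat k n"
  shows "mat_adj (A*B) = mat_adj B * mat_adj A"
  by (rule eq_matI, insert assms, auto simp: index_mult_mat scalar_prod_def mult.commute)

lemma adj_one[simp]: "mat_adj (1\<^sub>m n) = 1\<^sub>m n"
  by (rule eq_matI, auto)

lemma adj_minus: assumes "A \<in> carrier_mat m n" "B \<in> carrier_mat m n"
  shows "mat_adj (A - B) = mat_adj A - mat_adj B"
  by (rule eq_matI, insert assms, auto)

lemma adj_add: assumes "A \<in> carrier_mat m n" "B \<in> carrier_mat m n"
  shows "mat_adj (A + B) = mat_adj A + mat_adj B"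
  by (rule eq_matI, insert assms, auto)

lemma adj_uminus: "mat_adj (- A) = - mat_adj A"
  by (rule eq_matI, auto)

lemma dg_carrier[simp]: "dg n f \<in> carrier_mat n n" by (auto simp: dg_def)
lemma dg_dim[simp]: "dim_row (dg n f) = n" "dim_col (dg n f) = n" by (auto simp: dg_def)
lemma dg_index[simp]: "i < n \<Longrightarrow> j < n \<Longrightarrow> dg n f $$ (i,j) = (if i = j then f i else 0)"
  by (auto simp: dg_def)

lemma adj_dg: "mat_adj (dg n f) = dg n (\<lambda>i. cnj (f i))"
  by (rule eq_matI, auto)

lemma mult_dg_index: assumes A: "A \<in> carrier_mat m n" and i: "i < m" and j: "j < n"
  shows "(A * dg n f) $$ (i,j) = A $$ (i,j) * f j"
proof -
  have "(A * dg n f) $$ (i,j) = (\<Sum>l = 0..<n. A $$ (i,l) * (if l = j then f l else 0))"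
    using A i j by (auto simp: index_mult_mat scalar_prod_def intro!: sum.cong)
  also have "\<dots> = A $$ (i,j) * f j" using j
    by (simp add: if_distrib[of "\<lambda>x. A $$ (i, _) * x"] sum.delta' cong: if_cong)
  finally show ?thesis .
qed

lemma dg_mult_index: assumes A: "A \<in> carrier_mat n m" and i: "i < n" and j: "j < m"
  shows "(dg n f * A) $$ (i,j) = f i * A $$ (i,j)"
proof -
  have "(dg n f * A) $$ (i,j) = (\<Sum>l = 0..<n. (if i = l then f i else 0) * A $$ (l,j))"
    using A i j by (auto simp: index_mult_mat scalar_prod_def intro!: sum.cong)
  also have "\<dots> = f i * A $$ (i,j)" using i
    by (simp add: if_distrib[of "\<lambda>x. x * A $$ (_, j)"] sum.delta cong: if_cong)
  finally show ?thesis .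
qed

lemma dg_mult_dg: "dg n f * dg n g = dg n (\<lambda>i. f i * g i)"
  by (rule eq_matI, subst mult_dg_index[of _ n n], auto)

lemma dg_one: "dg n (\<lambda>_. 1) = 1\<^sub>m n" by (rule eq_matI, auto)

lemma dg_comm: "dg n f * dg n g = dg n g * dg n f"
  by (simp add: dg_mult_dg mult.commute)

lemma det_dg: "det (dg n f) = (\<Prod>i<n. f i)"
proof -
  have ut: "upper_triangular (dg n f)" by (auto simp: upper_triangular_def)
  have "det (dg n f) = prod_list (diag_mat (dg n f))"
    by (rule det_upper_triangular[OF ut dg_carrier])
  also have "diag_mat (dg n f) = map f [0..<n]"
    by (rule nth_equalityI, auto simp: diag_mat_def)
  also have "prod_list (map f [0..<n]) = (\<Prod>i<n. f i)"
    by (induct n) (auto simp: lessThan_Suc mult.commute)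
  finally show ?thesis .
qed

lemma det_adj: assumes A: "A \<in> carrier_mat n n"
  shows "det (mat_adj A) = cnj (det A)"
proof -
  interpret c: comm_ring_hom cnj by unfold_locales auto
  have "mat_adj A = map_mat cnj (transpose_mat A)" by (rule eq_matI, auto)
  thus ?thesis using det_transpose[OF A] by simp
qed

lemma cnj_mult_self: "cnj z * z = complex_of_real ((cmod z)^2)"
  by (metis complex_norm_square mult.commute)

lemma mult_cnj_self: "z * cnj z = complex_of_real ((cmod z)^2)"
  by (metis complex_norm_square)

lemma vn2_nonneg: "vn2 v \<ge> 0" unfolding vn2_def by (auto intro: sum_nonneg)

lemma adj_mult_self_diag: assumes Y: "Y \<in> carrier_mat m k" and j: "j < k"
  shows "(mat_adj Y * Y) $$ (j,j) = complex_of_real (vn2 (col Y j))"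
proof -
  have "(mat_adj Y * Y) $$ (j,j) = (\<Sum>i = 0..<m. cnj (Y $$ (i,j)) * Y $$ (i,j))"
    using Y j by (auto simp: index_mult_mat scalar_prod_def intro!: sum.cong)
  also have "\<dots> = (\<Sum>i = 0..<m. complex_of_real ((cmod (Y $$ (i,j)))^2))"
    by (simp add: cnj_mult_self)
  also have "\<dots> = complex_of_real (vn2 (col Y j))"
    using Y j by (simp add: vn2_def atLeast0LessThan)
  finally show ?thesis .
qed

lemma cscalar_self: assumes "x \<in> carrier_vec n"
  shows "x \<bullet>c x = complex_of_real (vn2 x)"
proof -
  have "x \<bullet>c x = (\<Sum>i<n. complex_of_real ((cmod (x $ i))^2))"
    using assms by (auto simp: scalar_prod_def atLeast0LessThan mult_cnj_self simp del: of_real_power intro!: sum.cong)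
  thus ?thesis using assms by (simp add: vn2_def)
qed

lemma unitary_right: assumes "unitary_mat n U" shows "U * mat_adj U = 1\<^sub>m n"
  using assms mat_mult_left_right_inverse[of "mat_adj U" n U] unfolding unitary_mat_def by auto

lemma unitary_adj: assumes "unitary_mat n U" shows "unitary_mat n (mat_adj U)"
  using assms unitary_right[OF assms] unfolding unitary_mat_def by auto

lemma unitary_mult: assumes U: "unitary_mat n U" and V: "unitary_mat n V"
  shows "unitary_mat n (U * V)"
proof -
  have c: "U \<in> carrier_mat n n" "V \<in> carrier_mat n n" using U V unfolding unitary_mat_def by auto
  have "mat_adj (U * V) * (U * V) = (mat_adj V * mat_adj U) * (U * V)"
    using c by (simp add: adj_mult)
  also have "\<dots> = mat_adj V * (mat_adj U * (U * V))"
    using c by (simp add: assoc_mult_mat[of _ n n _ n _ n])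
  also have "mat_adj U * (U * V) = (mat_adj U * U) * V"
    using c by (simp add: assoc_mult_mat[of _ n n _ n _ n])
  also have "\<dots> = V" using U c unfolding unitary_mat_def by simp
  also have "mat_adj V * V = 1\<^sub>m n" using V unfolding unitary_mat_def by simp
  finally show ?thesis using c unfolding unitary_mat_def by auto
qed

lemma unitary_det: assumes U: "unitary_mat n U" shows "cmod (det U) = 1"
proof -
  have c: "U \<in> carrier_mat n n" using U unfolding unitary_mat_def by auto
  have "det (mat_adj U * U) = 1" using U unfolding unitary_mat_def by simp
  hence "cnj (det U) * det U = 1" using det_mult[of "mat_adj U" n U] det_adj[OF c] c by simp
  hence "complex_of_real ((cmod (det U))^2) = 1" by (simp add: cnj_mult_self)
  hence "(cmod (det U))^2 = 1" by (metis of_real_eq_1_iff)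
  thus ?thesis using norm_ge_zero[of "det U"] by (simp add: power2_eq_1_iff)
qed

lemma unitary_col_vn2: assumes U: "unitary_mat n U" and j: "j < n" shows "vn2 (col U j) = 1"
proof -
  have c: "U \<in> carrier_mat n n" using U unfolding unitary_mat_def by auto
  have "complex_of_real (vn2 (col U j)) = 1"
    using adj_mult_self_diag[OF c j] U j unfolding unitary_mat_def by simp
  thus ?thesis by (metis of_real_eq_1_iff)
qed

lemma det_inv: assumes A: "(A :: complex mat) \<in> carrier_mat n n" and d: "det A \<noteq> 0"
  shows "\<exists>B \<in> carrier_mat n n. A * B = 1\<^sub>m n \<and> B * A = 1\<^sub>m n"
proof -
  from det_non_zero_imp_unit[OF A d, of undefined]
  show ?thesis unfolding Units_def ring_mat_simps by (auto simp: ring_mat_def)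
qed

lemma unitary_completion:
  assumes n: "0 < n" and u: "u \<in> carrier_vec n" and un: "vn2 u = 1"
  shows "\<exists>W. unitary_mat n W \<and> col W 0 = u"
proof -
  interpret cof_vec_space n "TYPE(complex)" .
  have u0: "u \<noteq> 0\<^sub>v n"
  proof
    assume "u = 0\<^sub>v n" hence "vn2 u = 0" by (simp add: vn2_def)
    with un show False by simp
  qed
  define b where "b = basis_completion u"
  from basis_completion[OF u u0, folded b_def]
  have dist_b: "distinct b" and indep: "\<not> lin_dep (set b)" and b: "set b \<subseteq> carrier_vec n"
    and hdb: "hd b = u" and len_b: "length b = n" by auto
  from hdb len_b n obtain vs where bv: "b = u # vs" by (cases b, auto)
  define ws where "ws = gram_schmidt n b"
  from gram_schmidt_result[OF b dist_b indep refl, folded ws_def]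
  have ws: "set ws \<subseteq> carrier_vec n" "corthogonal ws" "length ws = n"
    by (auto simp: len_b)
  have hdws: "hd ws = u" unfolding ws_def bv using gram_schmidt_hd[OF u, of vs] by simp
  have ws0: "ws ! 0 = u" using hdws ws(3) n by (cases ws, auto)
  have wsc: "\<And>j. j < n \<Longrightarrow> ws ! j \<in> carrier_vec n" using ws by auto
  define nm where "nm j = sqrt (vn2 (ws ! j))" for j
  have wsn: "\<And>j. j < n \<Longrightarrow> vn2 (ws ! j) > 0"
  proof -
    fix j assume j: "j < n"
    have "ws ! j \<bullet>c ws ! j \<noteq> 0" using ws(2) j ws(3) unfolding corthogonal_def by auto
    thus "vn2 (ws ! j) > 0" using cscalar_self[OF wsc[OF j]] vn2_nonneg[of "ws ! j"] by auto
  qed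
  have nmpos: "\<And>j. j < n \<Longrightarrow> nm j > 0" using wsn unfolding nm_def by auto
  have nm0: "nm 0 = 1" using ws0 un unfolding nm_def by simp
  define W where "W = mat n n (\<lambda>(i,j). ws ! j $ i / complex_of_real (nm j))"
  have W: "W \<in> carrier_mat n n" unfolding W_def by auto
  have "mat_adj W * W = 1\<^sub>m n"
  proof (rule eq_matI)
    fix i j assume i: "i < dim_row (1\<^sub>m n)" and j: "j < dim_col (1\<^sub>m n)"
    hence i: "i < n" and j: "j < n" by auto
    have "(mat_adj W * W) $$ (i,j) = (\<Sum>k = 0..<n. cnj (ws ! i $ k / complex_of_real (nm i)) * (ws ! j $ k / complex_of_real (nm j)))"
      using i j W by (auto simp: index_mult_mat scalar_prod_def W_def intro!: sum.cong)
    also have "\<dots> = (\<Sum>k = 0..<n. ws ! j $ k * cnj (ws ! i $ k)) / complex_of_real (nm i * nm j)"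
      by (simp add: sum_divide_distrib field_simps)
    also have "(\<Sum>k = 0..<n. ws ! j $ k * cnj (ws ! i $ k)) = ws ! j \<bullet>c ws ! i"
      using wsc[OF i] wsc[OF j] by (auto simp: scalar_prod_def intro!: sum.cong)
    finally have eq: "(mat_adj W * W) $$ (i,j) = ws ! j \<bullet>c ws ! i / complex_of_real (nm i * nm j)" .
    show "(mat_adj W * W) $$ (i,j) = 1\<^sub>m n $$ (i,j)"
    proof (cases "i = j")
      case True
      have "ws ! j \<bullet>c ws ! j = complex_of_real (nm j * nm j)"
        using cscalar_self[OF wsc[OF j]] vn2_nonneg[of "ws ! j"] unfolding nm_def by simp
      thus ?thesis using eq True i nmpos[OF j] by simp
    next
      case False
      have "ws ! j \<bullet>c ws ! i = 0" using ws(2) i j ws(3) False unfolding corthogonal_def by auto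
      thus ?thesis using eq False i j by simp
    qed
  qed (insert W, auto)
  hence "unitary_mat n W" using W unfolding unitary_mat_def by auto
  moreover have "col W 0 = u"
    by (rule eq_vecI, insert u n, auto simp: W_def ws0 nm0)
  ultimately show ?thesis by blast
qed

lemma vn2_col_adj_mult: assumes W: "unitary_mat n W" and A: "A \<in> carrier_mat n k" and j: "j < k"
  shows "vn2 (col (mat_adj W * A) j) = vn2 (col A j)"
proof -
  have Wc: "W \<in> carrier_mat n n" using W unfolding unitary_mat_def by auto
  have B: "mat_adj W * A \<in> carrier_mat n k" using Wc A by auto
  have "mat_adj (mat_adj W * A) * (mat_adj W * A) = (mat_adj A * W) * (mat_adj W * A)"
    using Wc A by (simp add: adj_mult[of "mat_adj W" n n A k])
  also have "\<dots> = mat_adj A * (W * (mat_adj W * A))"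
    using Wc A by (intro assoc_mult_mat[of "mat_adj A" k n W n "mat_adj W * A" k], auto)
  also have "W * (mat_adj W * A) = (W * mat_adj W) * A"
    using Wc A by (simp add: assoc_mult_mat[of W n n "mat_adj W" n A k])
  also have "\<dots> = A" using unitary_right[OF W] A by simp
  finally have eq: "mat_adj (mat_adj W * A) * (mat_adj W * A) = mat_adj A * A" .
  have "complex_of_real (vn2 (col (mat_adj W * A) j)) = complex_of_real (vn2 (col A j))"
    using adj_mult_self_diag[OF B j] adj_mult_self_diag[OF A j] eq by simp
  thus ?thesis by simp
qed

lemma vn2_smult: "vn2 (c \<cdot>\<^sub>v v) = (cmod c)^2 * vn2 v"
  by (simp add: vn2_def norm_mult power_mult_distrib sum_distrib_left)

lemma hadamard: assumes "A \<in> carrier_mat n n"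
  shows "(cmod (det A))^2 \<le> (\<Prod>k<n. vn2 (col A k))"
  using assms
proof (induct n arbitrary: A)
  case 0
  hence "A = 1\<^sub>m 0" by (intro eq_matI, auto)
  thus ?case by simp
next
  case (Suc m A)
  note A = Suc(2)
  define a0 where "a0 = col A 0"
  have a0c: "a0 \<in> carrier_vec (Suc m)" using A unfolding a0_def by (metis col_dim carrier_matD(1))
  have prodnn: "0 \<le> (\<Prod>k<Suc m. vn2 (col A k))" by (rule prod_nonneg, rule vn2_nonneg)
  show ?case
  proof (cases "vn2 a0 = 0")
    case True
    have z: "\<And>i. i < Suc m \<Longrightarrow> A $$ (i,0) = 0"
    proof -
      fix i assume i: "i < Suc m"
      have "(cmod (a0 $ i))^2 \<le> vn2 a0"
        unfolding vn2_def using i a0c by (intro member_le_sum, auto)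
      hence "a0 $ i = 0" using True by simp
      thus "A $$ (i,0) = 0" using i A unfolding a0_def by auto
    qed
    have "det A = (\<Sum>i<Suc m. A $$ (i,0) * cofactor A i 0)"
      by (rule laplace_expansion_column[OF A], simp)
    also have "\<dots> = 0" using z by simp
    finally show ?thesis using prodnn by simp
  next
    case False
    define s where "s = sqrt (vn2 a0)"
    have spos: "s > 0" using False vn2_nonneg[of a0] unfolding s_def by auto
    define u where "u = complex_of_real (1 / s) \<cdot>\<^sub>v a0"
    have uc: "u \<in> carrier_vec (Suc m)" using a0c unfolding u_def by auto
    have s2: "s^2 = vn2 a0" unfolding s_def using vn2_nonneg[of a0] by simp
    have "vn2 u = (1/s)^2 * vn2 a0" unfolding u_def vn2_smult using spos
      by (simp only: norm_of_real, simp)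
    hence un: "vn2 u = 1" using s2 spos False by (simp add: power_divide)
    obtain W where W: "unitary_mat (Suc m) W" and cW: "col W 0 = u"
      using unitary_completion[OF _ uc un] by auto
    have Wc: "W \<in> carrier_mat (Suc m) (Suc m)" using W unfolding unitary_mat_def by auto
    have a0u: "a0 = complex_of_real s \<cdot>\<^sub>v col W 0"
      unfolding cW u_def using spos by (intro eq_vecI, auto)
    define B where "B = mat_adj W * A"
    have Bc: "B \<in> carrier_mat (Suc m) (Suc m)" using Wc A unfolding B_def by auto
    have detB: "cmod (det B) = cmod (det A)"
      unfolding B_def using det_mult[of "mat_adj W" "Suc m" A] Wc A det_adj[OF Wc] unitary_det[OF W]
      by (simp add: norm_mult)
    have B0: "B $$ (i,0) = (if i = 0 then complex_of_real s else 0)" if i: "i < Suc m" for i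
    proof -
      have "B $$ (i,0) = row (mat_adj W) i \<bullet> a0"
        unfolding B_def a0_def using i Wc A by (simp add: index_mult_mat)
      also have "\<dots> = complex_of_real s * (row (mat_adj W) i \<bullet> col W 0)"
        unfolding a0u using i Wc by simp
      also have "row (mat_adj W) i \<bullet> col W 0 = (mat_adj W * W) $$ (i,0)"
        using i Wc by (simp add: index_mult_mat)
      also have "\<dots> = (if i = 0 then 1 else 0)" using W i unfolding unitary_mat_def by simp
      finally show ?thesis by simp
    qed
    define C where "C = mat_delete B 0 0"
    have Cc: "C \<in> carrier_mat m m" unfolding C_def using mat_delete_carrier[OF Bc] by simp
    have "det B = (\<Sum>i<Suc m. B $$ (i,0) * cofactor B i 0)"
      by (rule laplace_expansion_column[OF Bc], simp)
    also have "\<dots> = (\<Sum>i<Suc m. if i = 0 then complex_of_real s * cofactor B 0 0 else 0)"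
      by (rule sum.cong, auto simp: B0)
    also have "\<dots> = complex_of_real s * det C"
      by (simp add: cofactor_def C_def)
    finally have dB: "det B = complex_of_real s * det C" .
    have IH: "(cmod (det C))^2 \<le> (\<Prod>k<m. vn2 (col C k))" by (rule Suc(1)[OF Cc])
    have colC: "vn2 (col C k) \<le> vn2 (col A (Suc k))" if k: "k < m" for k
    proof -
      have "vn2 (col B (Suc k)) = (\<Sum>i<Suc m. (cmod (B $$ (i, Suc k)))^2)"
        unfolding vn2_def using Bc k by (auto intro!: sum.cong)
      also have "\<dots> = (cmod (B $$ (0, Suc k)))^2 + (\<Sum>i<m. (cmod (B $$ (Suc i, Suc k)))^2)"
        by (rule sum.lessThan_Suc_shift)
      finally have "vn2 (col B (Suc k)) = (cmod (B $$ (0, Suc k)))^2 + (\<Sum>i<m. (cmod (B $$ (Suc i, Suc k)))^2)" .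
      moreover have "vn2 (col C k) = (\<Sum>i<m. (cmod (B $$ (Suc i, Suc k)))^2)"
        unfolding vn2_def C_def mat_delete_def using Bc k by simp
      moreover have "vn2 (col B (Suc k)) = vn2 (col A (Suc k))"
        unfolding B_def by (rule vn2_col_adj_mult[OF W A], insert k, simp)
      ultimately show ?thesis by simp
    qed
    have "(cmod (det A))^2 = s^2 * (cmod (det C))^2"
      using detB dB spos by (simp add: norm_mult, metis power_mult_distrib)
    also have "\<dots> \<le> s^2 * (\<Prod>k<m. vn2 (col C k))"
      using IH by (intro mult_left_mono, auto)
    also have "\<dots> \<le> s^2 * (\<Prod>k<m. vn2 (col A (Suc k)))"
      by (intro mult_left_mono prod_mono, auto intro: vn2_nonneg colC)
    also have "s^2 = vn2 (col A 0)" unfolding s_def a0_def using vn2_nonneg by simp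
    also have "vn2 (col A 0) * (\<Prod>k<m. vn2 (col A (Suc k))) = (\<Prod>k<Suc m. vn2 (col A k))"
      by (rule prod.lessThan_Suc_shift[symmetric])
    finally show ?thesis .
  qed
qed

definition ext1 :: "complex \<Rightarrow> complex mat \<Rightarrow> complex mat" where
  "ext1 c M = mat (Suc (dim_row M)) (Suc (dim_col M))
     (\<lambda>(i,j). if i = 0 \<and> j = 0 then c else if i = 0 \<or> j = 0 then 0 else M $$ (i-1, j-1))"

lemma ext1_carrier[simp]: "M \<in> carrier_mat m n \<Longrightarrow> ext1 c M \<in> carrier_mat (Suc m) (Suc n)"
  by (auto simp: ext1_def)

lemma ext1_dim[simp]: "dim_row (ext1 c M) = Suc (dim_row M)" "dim_col (ext1 c M) = Suc (dim_col M)"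
  by (auto simp: ext1_def)

lemma ext1_index[simp]: "i < Suc (dim_row M) \<Longrightarrow> j < Suc (dim_col M) \<Longrightarrow>
  ext1 c M $$ (i,j) = (if i = 0 \<and> j = 0 then c else if i = 0 \<or> j = 0 then 0 else M $$ (i-1, j-1))"
  by (auto simp: ext1_def)

lemma ext1_mult: assumes M: "M \<in> carrier_mat m k" and N: "N \<in> carrier_mat k n"
  shows "ext1 a M * ext1 b N = ext1 (a * b) (M * N)"
proof (rule eq_matI)
  fix i j assume i: "i < dim_row (ext1 (a * b) (M * N))" and j: "j < dim_col (ext1 (a * b) (M * N))"
  hence i: "i < Suc m" and j: "j < Suc n" using M N by auto
  have "(ext1 a M * ext1 b N) $$ (i,j) = (\<Sum>l<Suc k. ext1 a M $$ (i,l) * ext1 b N $$ (l,j))"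
    using i j M N by (auto simp: index_mult_mat scalar_prod_def atLeast0LessThan)
  also have "\<dots> = ext1 a M $$ (i,0) * ext1 b N $$ (0,j) + (\<Sum>l<k. ext1 a M $$ (i,Suc l) * ext1 b N $$ (Suc l,j))"
    by (rule sum.lessThan_Suc_shift)
  also have "\<dots> = ext1 (a * b) (M * N) $$ (i,j)"
  proof (cases "i = 0 \<or> j = 0")
    case True
    thus ?thesis using i j M N by auto
  next
    case False
    then obtain i' j' where ii: "i = Suc i'" and jj: "j = Suc j'" by (cases i; cases j; auto)
    have "(\<Sum>l<k. ext1 a M $$ (i,Suc l) * ext1 b N $$ (Suc l,j)) = (\<Sum>l<k. M $$ (i',l) * N $$ (l,j'))"
      using i j M N ii jj by (auto intro!: sum.cong)
    thus ?thesis using i j M N ii jj by (simp add: index_mult_mat scalar_prod_def atLeast0LessThan)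
  qed
  finally show "(ext1 a M * ext1 b N) $$ (i,j) = ext1 (a * b) (M * N) $$ (i,j)" .
qed (insert M N, auto)

lemma adj_ext1: "mat_adj (ext1 c M) = ext1 (cnj c) (mat_adj M)"
  by (rule eq_matI, auto)

lemma ext1_one: "ext1 1 (1\<^sub>m m) = 1\<^sub>m (Suc m)"
  by (rule eq_matI, auto)

lemma dg_Suc: "dg (Suc m) f = ext1 (f 0) (dg m (\<lambda>i. f (Suc i)))"
  by (rule eq_matI, auto)

lemma unitary_ext1: assumes "unitary_mat m V" shows "unitary_mat (Suc m) (ext1 1 V)"
  using assms unfolding unitary_mat_def
  by (auto simp: adj_ext1 ext1_mult[of _ m m _ m] ext1_one)

lemma block_ext1: assumes B: "B \<in> carrier_mat (Suc m) (Suc m)"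
  and c0: "\<And>i. 0 < i \<Longrightarrow> i < Suc m \<Longrightarrow> B $$ (i,0) = 0"
  and r0: "\<And>j. 0 < j \<Longrightarrow> j < Suc m \<Longrightarrow> B $$ (0,j) = 0"
  shows "B = ext1 (B $$ (0,0)) (mat_delete B 0 0)"
  by (rule eq_matI, insert B c0 r0, auto simp: mat_delete_def)

lemma char_poly_ext1: assumes M: "M \<in> carrier_mat m m"
  shows "char_poly (ext1 c M) = [:- c, 1:] * char_poly M"
proof -
  have "ext1 c M = four_block_mat (mat 1 1 (\<lambda>_. c)) (0\<^sub>m 1 m) (0\<^sub>m m 1) M"
    by (rule eq_matI, insert M, auto)
  also have "char_poly \<dots> = char_poly (mat 1 1 (\<lambda>_. c)) * char_poly M"
    by (rule char_poly_four_block_zeros_col, insert M, auto)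
  also have "char_poly (mat 1 1 (\<lambda>_. c)) = [:- c, 1:]"
    by (simp add: char_poly_defs det_def sign_def)
  finally show ?thesis .
qed

lemma vn2_zero_iff: assumes "v \<in> carrier_vec n" shows "vn2 v = 0 \<longleftrightarrow> v = 0\<^sub>v n"
proof
  assume z: "vn2 v = 0"
  show "v = 0\<^sub>v n"
  proof (rule eq_vecI)
    fix i assume i: "i < dim_vec (0\<^sub>v n)"
    have "(cmod (v $ i))^2 \<le> vn2 v"
      unfolding vn2_def using i assms by (intro member_le_sum, auto)
    thus "v $ i = 0\<^sub>v n $ i" using z i by simp
  qed (insert assms, auto)
qed (simp add: vn2_def)

lemma spectral:
  assumes "A \<in> carrier_mat n n" and "mat_adj A = A"
    and "char_poly A = (\<Prod>k<n. [:- c k, 1:])"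
  shows "\<exists>V. unitary_mat n V \<and> A = V * dg n c * mat_adj V"
  using assms
proof (induct n arbitrary: A c)
  case 0
  have "unitary_mat 0 (1\<^sub>m 0)" unfolding unitary_mat_def by auto
  moreover have "A = 1\<^sub>m 0 * dg 0 c * mat_adj (1\<^sub>m 0)" by (rule eq_matI, insert 0, auto)
  ultimately show ?case by blast
next
  case (Suc m A c)
  note A = Suc(2) and herm = Suc(3) and cp = Suc(4)
  have "poly (char_poly A) (c 0) = 0" unfolding cp poly_prod
    by (rule prod_zero, auto)
  hence "eigenvalue A (c 0)" using eigenvalue_root_char_poly[OF A] by simp
  then obtain v where ev: "eigenvector A v (c 0)" unfolding eigenvalue_def by auto
  hence v: "v \<in> carrier_vec (Suc m)" and v0: "v \<noteq> 0\<^sub>v (Suc m)" and Av: "A *\<^sub>v v = c 0 \<cdot>\<^sub>v v"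
    unfolding eigenvector_def using A by auto
  have vpos: "vn2 v > 0" using vn2_zero_iff[OF v] v0 vn2_nonneg[of v] by auto
  define s where "s = sqrt (vn2 v)"
  have spos: "s > 0" using vpos unfolding s_def by auto
  have s2: "s^2 = vn2 v" unfolding s_def using vpos by simp
  define u where "u = complex_of_real (1 / s) \<cdot>\<^sub>v v"
  have uc: "u \<in> carrier_vec (Suc m)" using v unfolding u_def by auto
  have "vn2 u = (1/s)^2 * vn2 v" unfolding u_def vn2_smult using spos
    by (simp only: norm_of_real, simp)
  hence un: "vn2 u = 1" using s2 spos vpos by (simp add: power_divide)
  have Au: "A *\<^sub>v u = c 0 \<cdot>\<^sub>v u"
    unfolding u_def using mult_mat_vec[OF A v] Av v
    by (intro eq_vecI, auto)
  obtain W where W: "unitary_mat (Suc m) W" and cW: "col W 0 = u"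
    using unitary_completion[OF _ uc un] by auto
  have Wc: "W \<in> carrier_mat (Suc m) (Suc m)" using W unfolding unitary_mat_def by auto
  have WW: "mat_adj W * W = 1\<^sub>m (Suc m)" using W unfolding unitary_mat_def by auto
  have WW': "W * mat_adj W = 1\<^sub>m (Suc m)" using unitary_right[OF W] .
  define B where "B = mat_adj W * (A * W)"
  have Bc: "B \<in> carrier_mat (Suc m) (Suc m)" using Wc A unfolding B_def by auto
  have B0: "B $$ (i,0) = (if i = 0 then c 0 else 0)" if i: "i < Suc m" for i
  proof -
    have "B $$ (i,0) = row (mat_adj W) i \<bullet> col (A * W) 0"
      unfolding B_def using i Wc A by (simp add: index_mult_mat)
    also have "col (A * W) 0 = A *\<^sub>v col W 0" by (rule col_mult2[OF A Wc], simp)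
    also have "\<dots> = c 0 \<cdot>\<^sub>v col W 0" unfolding cW by (rule Au)
    also have "row (mat_adj W) i \<bullet> (c 0 \<cdot>\<^sub>v col W 0) = c 0 * (row (mat_adj W) i \<bullet> col W 0)"
      using i Wc by simp
    also have "row (mat_adj W) i \<bullet> col W 0 = (mat_adj W * W) $$ (i,0)"
      using i Wc by (simp add: index_mult_mat)
    also have "\<dots> = (if i = 0 then 1 else 0)" using WW i by simp
    finally show ?thesis by simp
  qed
  have hB: "mat_adj B = B"
  proof -
    have "mat_adj B = mat_adj (A * W) * W" unfolding B_def using Wc A
      by (simp add: adj_mult[of "mat_adj W" "Suc m" "Suc m" "A * W" "Suc m"])
    also have "mat_adj (A * W) = mat_adj W * A" using Wc A herm
      by (simp add: adj_mult[of A "Suc m" "Suc m" W "Suc m"])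
    also have "mat_adj W * A * W = B" unfolding B_def using Wc A
      by (intro assoc_mult_mat[of _ "Suc m" "Suc m" _ "Suc m" _ "Suc m"], auto)
    finally show ?thesis .
  qed
  have R0: "B $$ (0,j) = 0" if j: "0 < j" "j < Suc m" for j
  proof -
    have "B $$ (0,j) = mat_adj B $$ (0,j)" using hB by simp
    also have "\<dots> = cnj (B $$ (j,0))" using Bc j by simp
    finally show ?thesis using B0 j by simp
  qed
  define C where "C = mat_delete B 0 0"
  have Cc: "C \<in> carrier_mat m m" unfolding C_def using mat_delete_carrier[OF Bc] by simp
  have BC: "B = ext1 (c 0) C"
    using block_ext1[OF Bc _ R0] B0 unfolding C_def by simp
  have AWB: "A = W * B * mat_adj W"
  proof -
    have "W * B = (W * mat_adj W) * (A * W)" unfolding B_def using Wc A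
      by (intro assoc_mult_mat[symmetric, of _ "Suc m" "Suc m" _ "Suc m" _ "Suc m"], auto)
    also have "\<dots> = A * W" using WW' A Wc by simp
    finally have "W * B * mat_adj W = A * W * mat_adj W" by simp
    also have "\<dots> = A * (W * mat_adj W)" using Wc A
      by (intro assoc_mult_mat[of _ "Suc m" "Suc m" _ "Suc m" _ "Suc m"], auto)
    also have "\<dots> = A" using WW' A by simp
    finally show ?thesis by simp
  qed
  have simAB: "similar_mat A B"
    unfolding similar_mat_def similar_mat_wit_def Let_def
    by (intro exI[of _ W] exI[of _ "mat_adj W"], insert A Bc Wc WW WW' AWB, auto)
  have "[:- c 0, 1:] * char_poly C = [:- c 0, 1:] * (\<Prod>k<m. [:- c (Suc k), 1:])"
  proof -
    have "[:- c 0, 1:] * char_poly C = char_poly B" unfolding BC using char_poly_ext1[OF Cc] by simp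
    also have "\<dots> = char_poly A" using char_poly_similar[OF simAB] by simp
    also have "\<dots> = [:- c 0, 1:] * (\<Prod>k<m. [:- c (Suc k), 1:])" unfolding cp
      by (rule prod.lessThan_Suc_shift)
    finally show ?thesis .
  qed
  hence cpC: "char_poly C = (\<Prod>k<m. [:- c (Suc k), 1:])"
    by (metis mult_cancel_left pCons_eq_0_iff zero_neq_one)
  have hC: "mat_adj C = C"
    by (rule eq_matI, insert Bc Cc hB, auto simp: C_def mat_delete_def,
        metis adj_index Bc carrier_matD Suc_less_eq)
  from Suc(1)[OF Cc hC cpC] obtain V3 where V3: "unitary_mat m V3"
    and CV: "C = V3 * dg m (\<lambda>k. c (Suc k)) * mat_adj V3" by auto
  have V3c: "V3 \<in> carrier_mat m m" using V3 unfolding unitary_mat_def by auto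
  define P where "P = ext1 1 V3"
  have P: "unitary_mat (Suc m) P" unfolding P_def by (rule unitary_ext1[OF V3])
  have Pc: "P \<in> carrier_mat (Suc m) (Suc m)" using P unfolding unitary_mat_def by auto
  have BP: "B = P * dg (Suc m) c * mat_adj P"
    unfolding BC CV P_def dg_Suc adj_ext1 using V3c
    by (simp add: ext1_mult[of _ m m _ m])
  define V where "V = W * P"
  have V: "unitary_mat (Suc m) V" unfolding V_def by (rule unitary_mult[OF W P])
  have Dc: "dg (Suc m) c \<in> carrier_mat (Suc m) (Suc m)" by simp
  have "A = W * (P * dg (Suc m) c * mat_adj P) * mat_adj W" using AWB BP by simp
  also have "W * (P * dg (Suc m) c * mat_adj P) = (W * (P * dg (Suc m) c)) * mat_adj P"
    using Wc Pc by (intro assoc_mult_mat[symmetric, of _ "Suc m" "Suc m" _ "Suc m" _ "Suc m"], auto)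
  also have "W * (P * dg (Suc m) c) = V * dg (Suc m) c" unfolding V_def
    using Wc Pc by (intro assoc_mult_mat[symmetric, of _ "Suc m" "Suc m" _ "Suc m" _ "Suc m"], auto)
  also have "V * dg (Suc m) c * mat_adj P * mat_adj W = V * dg (Suc m) c * (mat_adj P * mat_adj W)"
    using Wc Pc V unfolding unitary_mat_def
    by (intro assoc_mult_mat[of _ "Suc m" "Suc m" _ "Suc m" _ "Suc m"], auto)
  also have "mat_adj P * mat_adj W = mat_adj V" unfolding V_def
    using Wc Pc by (simp add: adj_mult[of W "Suc m" "Suc m" P "Suc m"])
  finally show ?case using V by blast
qed

lemma prod_le1_eq1:
  assumes fin: "finite I" and b: "\<And>i. i \<in> I \<Longrightarrow> 0 \<le> x i \<and> x i \<le> (1::real)"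
    and p: "1 \<le> (\<Prod>i\<in>I. x i)" and j: "j \<in> I"
  shows "x j = 1"
proof (rule ccontr)
  assume "x j \<noteq> 1" hence lt: "x j < 1" using b[OF j] by auto
  have "(\<Prod>i\<in>I. x i) = x j * (\<Prod>i\<in>I - {j}. x i)" using fin j by (simp add: prod.remove)
  also have "(\<Prod>i\<in>I - {j}. x i) \<le> 1" using b by (intro prod_le_1, auto)
  hence "x j * (\<Prod>i\<in>I - {j}. x i) \<le> x j" using b[OF j] by (simp add: mult_left_le)
  finally show False using p lt by simp
qed

lemma aux1: fixes d a s :: real
  assumes e: "1 - 2*d*a + d^2*s = (1+d)^2" and s: "s \<le> 1" and d: "d > 0"
  shows "a \<le> -1"
proof -
  have h: "d^2 * s \<le> d^2" using s by (simp add: mult_left_le)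
  have "d*a \<le> d*(-1)" using e h by (auto simp: power2_sum algebra_simps)
  thus ?thesis using d mult_le_cancel_left_pos by blast
qed

lemma sq_le0: "(b::real)^2 \<le> 0 \<Longrightarrow> b = 0" by (smt (verit) zero_le_power2 power_eq_0_iff zero_less_numeral)

lemma aux2: fixes a b :: real assumes "a \<le> -1" "a^2 + b^2 \<le> 1" shows "a = -1 \<and> b = 0"
proof -
  have a1: "a^2 \<ge> 1" using assms(1) by (smt (verit) one_le_power power2_minus)
  hence "b^2 \<le> 0" using assms(2) by linarith
  hence "b = 0" by (rule sq_le0)
  moreover have "a^2 \<le> 1" using assms(2) by (smt (verit) zero_le_power2)
  ultimately show ?thesis using assms(1) a1 by (smt (verit) power2_eq_1_iff)
qed

lemma cmod_sq: "(cmod z)^2 = (Re z)^2 + (Im z)^2"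
  by (simp add: cmod_def)

lemma col_sq_le: assumes "W \<in> carrier_mat n n" "i < n" "k < n"
  shows "(cmod (W $$ (i,k)))^2 \<le> vn2 (col W k)"
proof -
  have "(cmod (col W k $ i))^2 \<le> (\<Sum>i<dim_vec (col W k). (cmod (col W k $ i))^2)"
    by (rule member_le_sum, insert assms, auto)
  thus ?thesis unfolding vn2_def using assms by simp
qed

lemma vn2_col_A: assumes W: "W \<in> carrier_mat n n" and k: "k < n"
  shows "vn2 (col (1\<^sub>m n - W * dg n (\<lambda>j. complex_of_real (d j))) k)
     = 1 - 2 * d k * Re (W $$ (k,k)) + (d k)^2 * vn2 (col W k)"
proof -
  let ?A = "1\<^sub>m n - W * dg n (\<lambda>j. complex_of_real (d j))"
  have ent: "?A $$ (i,k) = (if i = k then 1 else 0) - complex_of_real (d k) * W $$ (i,k)" if i: "i < n" for i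
  proof -
    have "?A $$ (i,k) = 1\<^sub>m n $$ (i,k) - (W * dg n (\<lambda>j. complex_of_real (d j))) $$ (i,k)"
      by (rule index_minus_mat(1), insert W i k, auto)
    thus ?thesis using W i k mult_dg_index[OF W i k] by (simp add: mult.commute del: index_mult_mat(1))
  qed
  have pt: "(cmod ((if i = k then 1 else 0) - complex_of_real (d k) * W $$ (i,k)))^2
     = (if i = k then 1 - 2 * d k * Re (W $$ (k,k)) else 0) + (d k)^2 * (cmod (W $$ (i,k)))^2" for i
    by (cases "i = k"; simp only: cmod_sq; simp add: power2_eq_square algebra_simps)
  have "vn2 (col ?A k) = (\<Sum>i<n. (cmod (?A $$ (i,k)))^2)"
    unfolding vn2_def using W k by (auto intro!: sum.cong)
  also have "\<dots> = (\<Sum>i<n. (if i = k then 1 - 2 * d k * Re (W $$ (k,k)) else 0) + (d k)^2 * (cmod (W $$ (i,k)))^2)"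
    by (rule sum.cong, simp, simp only: ent lessThan_iff pt)
  also have "\<dots> = (1 - 2 * d k * Re (W $$ (k,k))) + (d k)^2 * (\<Sum>i<n. (cmod (W $$ (i,k)))^2)"
    using k by (simp add: sum.distrib sum_distrib_left)
  also have "(\<Sum>i<n. (cmod (W $$ (i,k)))^2) = vn2 (col W k)"
    unfolding vn2_def using W k by (auto intro!: sum.cong)
  finally show ?thesis by simp
qed

lemma upper_bound:
  assumes W: "W \<in> carrier_mat n n" and cols: "\<And>k. k < n \<Longrightarrow> vn2 (col W k) \<le> 1"
    and d: "\<And>k. k < n \<Longrightarrow> 0 \<le> d k"
  shows "cmod (det (1\<^sub>m n - W * dg n (\<lambda>j. complex_of_real (d j)))) \<le> (\<Prod>k<n. 1 + d k)"
    and "cmod (det (1\<^sub>m n - W * dg n (\<lambda>j. complex_of_real (d j)))) = (\<Prod>k<n. 1 + d k) \<Longrightarrow>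
         W * dg n (\<lambda>j. complex_of_real (d j)) = - dg n (\<lambda>j. complex_of_real (d j))"
proof -
  define D where "D = dg n (\<lambda>j. complex_of_real (d j))"
  define A where "A = 1\<^sub>m n - W * D"
  have Ac: "A \<in> carrier_mat n n" using W unfolding A_def D_def by auto
  define M where "M = A * dg n (\<lambda>j. complex_of_real (1 / (1 + d j)))"
  have Mc: "M \<in> carrier_mat n n" using Ac unfolding M_def by auto
  have pp: "(\<Prod>k<n. 1 + d k) > 0" using d by (intro prod_pos, auto simp: add_pos_nonneg)
  have detM: "cmod (det M) = cmod (det A) / (\<Prod>k<n. 1 + d k)"
  proof -
    have "det M = det A * (\<Prod>k<n. complex_of_real (1 / (1 + d k)))"
      unfolding M_def using det_mult[OF Ac dg_carrier] det_dg by simp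
    hence "cmod (det M) = cmod (det A) * (\<Prod>k<n. cmod (complex_of_real (1 / (1 + d k))))"
      by (simp add: norm_mult prod_norm)
    also have "(\<Prod>k<n. cmod (complex_of_real (1 / (1 + d k)))) = (\<Prod>k<n. 1 / (1 + d k))"
      by (rule prod.cong[OF refl], subst norm_of_real, insert d, simp add: add_nonneg_nonneg)
    also have "\<dots> = 1 / (\<Prod>k<n. 1 + d k)" by (simp add: prod_dividef)
    finally show ?thesis by simp
  qed
  have vA: "vn2 (col A k) = 1 - 2 * d k * Re (W $$ (k,k)) + (d k)^2 * vn2 (col W k)" if k: "k < n" for k
    unfolding A_def D_def by (rule vn2_col_A[OF W k])
  have vM: "vn2 (col M k) = vn2 (col A k) / (1 + d k)^2" if k: "k < n" for k
  proof -
    have "col M k = complex_of_real (1 / (1 + d k)) \<cdot>\<^sub>v col A k"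
      using Ac k unfolding M_def by (intro eq_vecI, auto simp: mult_dg_index[OF Ac] simp del: index_mult_mat(1))
    hence "vn2 (col M k) = (cmod (complex_of_real (1 / (1 + d k))))^2 * vn2 (col A k)"
      by (simp add: vn2_smult)
    also have "cmod (complex_of_real (1 / (1 + d k))) = 1 / (1 + d k)"
      by (subst norm_of_real, insert d[OF k], simp add: add_nonneg_nonneg)
    finally show ?thesis by (simp add: power_divide)
  qed
  have Wkk: "- Re (W $$ (k,k)) \<le> 1" if k: "k < n" for k
  proof -
    have "(cmod (W $$ (k,k)))^2 \<le> 1" using col_sq_le[OF W k k] cols[OF k] by simp
    hence "cmod (W $$ (k,k)) \<le> 1" by (simp add: power_le_one_iff)
    thus ?thesis using abs_Re_le_cmod[of "W $$ (k,k)"] by simp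
  qed
  have vAle: "vn2 (col A k) \<le> (1 + d k)^2" if k: "k < n" for k
  proof -
    have "d k * (- Re (W $$ (k,k))) \<le> d k * 1" using Wkk[OF k] d[OF k] by (intro mult_left_mono)
    moreover have "(d k)^2 * vn2 (col W k) \<le> (d k)^2 * 1" using cols[OF k] by (intro mult_left_mono, auto)
    ultimately show ?thesis unfolding vA[OF k] by (simp add: power2_eq_square algebra_simps)
  qed
  have vMb: "0 \<le> vn2 (col M k) \<and> vn2 (col M k) \<le> 1" if k: "k < n" for k
  proof -
    have "(1 + d k)^2 > 0" using d[OF k] by (simp add: add_nonneg_nonneg add_pos_nonneg)
    thus ?thesis using vAle[OF k] vn2_nonneg[of "col M k"] unfolding vM[OF k]
      by (simp add: divide_le_eq_1)
  qed
  have hadM: "(cmod (det M))^2 \<le> 1"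
  proof -
    have "(cmod (det M))^2 \<le> (\<Prod>k<n. vn2 (col M k))" by (rule hadamard[OF Mc])
    also have "\<dots> \<le> 1" using vMb by (intro prod_le_1, auto)
    finally show ?thesis .
  qed
  hence M1: "cmod (det M) \<le> 1" by (simp add: power_le_one_iff)
  show ub: "cmod (det (1\<^sub>m n - W * dg n (\<lambda>j. complex_of_real (d j)))) \<le> (\<Prod>k<n. 1 + d k)"
  proof -
    have aux: "\<And>x y p::real. x = y / p \<Longrightarrow> 0 < p \<Longrightarrow> y = x * p" by (simp add: field_simps)
    have cA: "cmod (det A) = cmod (det M) * (\<Prod>k<n. 1 + d k)" by (rule aux[OF detM pp])
    also have "\<dots> \<le> 1 * (\<Prod>k<n. 1 + d k)" using M1 pp by (intro mult_right_mono, auto)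
    finally show ?thesis unfolding A_def D_def by simp
  qed
  assume eq: "cmod (det (1\<^sub>m n - W * dg n (\<lambda>j. complex_of_real (d j)))) = (\<Prod>k<n. 1 + d k)"
  hence "cmod (det M) = 1" using detM pp d unfolding A_def D_def by (simp only:, auto simp: add_nonneg_eq_0_iff)
  hence p1: "1 \<le> (\<Prod>k<n. vn2 (col M k))" using hadamard[OF Mc] by simp
  have colk: "W $$ (i,k) = (if i = k then -1 else 0)" if k: "k < n" and i: "i < n" and dk: "d k > 0" for i k
  proof -
    have "vn2 (col M k) = 1" using prod_le1_eq1[of "{..<n}" "\<lambda>k. vn2 (col M k)" k] vMb p1 k by auto
    hence "vn2 (col A k) = (1 + d k)^2" unfolding vM[OF k] using d[OF k]
      by (simp add: add_nonneg_nonneg)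
    hence e: "1 - 2 * d k * Re (W $$ (k,k)) + (d k)^2 * vn2 (col W k) = (1 + d k)^2" using vA[OF k] by simp
    have re: "Re (W $$ (k,k)) \<le> -1" by (rule aux1[OF e cols[OF k] dk])
    have sq: "(cmod (W $$ (k,k)))^2 \<le> vn2 (col W k)" by (rule col_sq_le[OF W k k])
    hence "(Re (W $$ (k,k)))^2 + (Im (W $$ (k,k)))^2 \<le> 1" using cols[OF k] by (simp add: cmod_sq)
    from aux2[OF re this] have rek: "W $$ (k,k) = -1" by (simp add: complex_eq_iff)
    have "1 \<le> (cmod (W $$ (k,k)))^2" using rek by simp
    with sq cols[OF k] have c1: "(cmod (W $$ (k,k)))^2 = 1" "vn2 (col W k) = 1" by auto
    show ?thesis
    proof (cases "i = k")
      case True thus ?thesis using rek by simp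
    next
      case False
      have "(\<Sum>j\<in>{i,k}. (cmod (W $$ (j,k)))^2) \<le> (\<Sum>j<n. (cmod (W $$ (j,k)))^2)"
        using i k by (intro sum_mono2, auto)
      also have "\<dots> = vn2 (col W k)" unfolding vn2_def using W k by (auto intro!: sum.cong)
      finally have "(cmod (W $$ (i,k)))^2 + (cmod (W $$ (k,k)))^2 \<le> 1" using False c1 by simp
      hence "(cmod (W $$ (i,k)))^2 \<le> 0" using c1 by simp
      hence "cmod (W $$ (i,k)) = 0" by (rule sq_le0)
      thus ?thesis using False by simp
    qed
  qed
  show "W * dg n (\<lambda>j. complex_of_real (d j)) = - dg n (\<lambda>j. complex_of_real (d j))"
  proof (rule eq_matI)
    fix i k assume i: "i < dim_row (- dg n (\<lambda>j. complex_of_real (d j)))"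
      and k: "k < dim_col (- dg n (\<lambda>j. complex_of_real (d j)))"
    hence i: "i < n" and k: "k < n" by auto
    show "(W * dg n (\<lambda>j. complex_of_real (d j))) $$ (i,k) = (- dg n (\<lambda>j. complex_of_real (d j))) $$ (i,k)"
    proof (cases "d k = 0")
      case True thus ?thesis using i k W mult_dg_index[OF W i k] by (simp del: index_mult_mat(1))
    next
      case False
      hence "d k > 0" using d[OF k] by simp
      thus ?thesis using colk[OF k i] i k W mult_dg_index[OF W i k] by (simp del: index_mult_mat(1))
    qed
  qed (insert W, auto)
qed

lemma mult3_dg_index: assumes X: "X \<in> carrier_mat n n" and Y: "Y \<in> carrier_mat n n"
  and i: "i < n" and j: "j < n"
  shows "(X * dg n g * Y) $$ (i,j) = (\<Sum>k<n. X $$ (i,k) * g k * Y $$ (k,j))"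
proof -
  have "(X * dg n g * Y) $$ (i,j) = (\<Sum>k = 0..<n. (X * dg n g) $$ (i,k) * Y $$ (k,j))"
    using X Y i j by (simp add: index_mult_mat(1)[of i "X * dg n g"] scalar_prod_def)
  also have "\<dots> = (\<Sum>k<n. X $$ (i,k) * g k * Y $$ (k,j))"
    unfolding atLeast0LessThan by (rule sum.cong, simp, subst mult_dg_index[OF X i], auto)
  finally show ?thesis .
qed

lemma pt_identity: fixes w1 cw2 g d :: "'a :: comm_ring_1"
  assumes h: "g * (1 - d * d) = 1"
  shows "(w1 - (if i = k then d else 0)) * g * (cw2 - (if k = j then d else 0))
    = ((if i = k then 1 else 0) - w1 * d) * g * ((if k = j then 1 else 0) - d * cw2)
      + w1 * cw2 - (if i = k \<and> k = j then 1 else 0)"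
proof -
  have a: "(w1 - d) * g * (cw2 - d) = (1 - w1 * d) * g * (1 - d * cw2) + w1 * cw2 - 1"
  proof -
    have "(w1 - d) * g * (cw2 - d) - ((1 - w1 * d) * g * (1 - d * cw2) + w1 * cw2 - 1) = (w1 * cw2 - 1) * (g * (1 - d * d) - 1)" by (simp add: algebra_simps)
    thus ?thesis using h by simp
  qed
  have b: "(w1 - d) * g * cw2 = (1 - w1 * d) * g * (- d * cw2) + w1 * cw2"
  proof -
    have "(w1 - d) * g * cw2 - ((1 - w1 * d) * g * (- d * cw2) + w1 * cw2) = (w1 * cw2) * (g * (1 - d * d) - 1)" by (simp add: algebra_simps)
    thus ?thesis using h by simp
  qed
  have c: "w1 * g * (cw2 - d) = (- w1 * d) * g * (1 - d * cw2) + w1 * cw2"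
  proof -
    have "w1 * g * (cw2 - d) - ((- w1 * d) * g * (1 - d * cw2) + w1 * cw2) = (w1 * cw2) * (g * (1 - d * d) - 1)" by (simp add: algebra_simps)
    thus ?thesis using h by simp
  qed
  have e: "w1 * g * cw2 = (- w1 * d) * g * (- d * cw2) + w1 * cw2"
  proof -
    have "w1 * g * cw2 - ((- w1 * d) * g * (- d * cw2) + w1 * cw2) = (w1 * cw2) * (g * (1 - d * d) - 1)" by (simp add: algebra_simps)
    thus ?thesis using h by simp
  qed
  show ?thesis using a b c e by (cases "i = k"; cases "k = j"; simp)
qed

lemma dg_X_dg_index: assumes X: "X \<in> carrier_mat n n" and i: "i < n" and j: "j < n"
  shows "(dg n a * X * dg n b) $$ (i,j) = a i * X $$ (i,j) * b j"
proof -
  have c: "dg n a * X \<in> carrier_mat n n" by (rule mult_carrier_mat[OF dg_carrier X])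
  show ?thesis unfolding mult_dg_index[OF c i j] dg_mult_index[OF X i j] ..
qed

lemma assoc_I2: fixes X1 :: "'a :: semiring_1 mat"
  assumes "X1 \<in> carrier_mat n n" "X2 \<in> carrier_mat n n" "X3 \<in> carrier_mat n n"
    "X4 \<in> carrier_mat n n" "X5 \<in> carrier_mat n n"
  shows "X1 * X2 * X3 * (X4 * X5) = X1 * (X2 * X3 * X4) * X5"
    and "X1 * (X2 * X3 * X4) * X5 = (X1 * X2) * X3 * (X4 * X5)"
  using assms by (simp_all add: assoc_mult_mat[of _ n n _ n _ n] mult_carrier_mat[of _ n n _ n])

lemma lower_bound:
  assumes W: "unitary_mat n W"
    and d: "\<And>k. k < n \<Longrightarrow> 0 \<le> d k \<and> d k < 1"
    and nz: "det (1\<^sub>m n - W * dg n (\<lambda>j. complex_of_real (d j))) \<noteq> 0"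
  shows "(\<Prod>k<n. 1 - d k) \<le> cmod (det (1\<^sub>m n - W * dg n (\<lambda>j. complex_of_real (d j))))"
    and "cmod (det (1\<^sub>m n - W * dg n (\<lambda>j. complex_of_real (d j)))) = (\<Prod>k<n. 1 - d k) \<Longrightarrow>
         W * dg n (\<lambda>j. complex_of_real (d j)) = dg n (\<lambda>j. complex_of_real (d j))"
proof -
  note nn = assoc_mult_mat[of _ n n _ n _ n] mult_carrier_mat[of _ n n _ n]
  define D where "D = dg n (\<lambda>j. complex_of_real (d j))"
  have Wc: "W \<in> carrier_mat n n" using W unfolding unitary_mat_def by auto
  have Dc: "D \<in> carrier_mat n n" unfolding D_def by simp
  define A where "A = 1\<^sub>m n - W * D"
  have Ac: "A \<in> carrier_mat n n" using Wc unfolding A_def D_def by auto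
  obtain Ai where Aic: "Ai \<in> carrier_mat n n" and AAi: "A * Ai = 1\<^sub>m n" and AiA: "Ai * A = 1\<^sub>m n"
    using det_inv[OF Ac] nz unfolding A_def D_def by auto
  define V where "V = Ai * (W - D)"
  have WDc0: "W - D \<in> carrier_mat n n" using Wc Dc by (auto intro: minus_carrier_mat)
  have Vc: "V \<in> carrier_mat n n" unfolding V_def using Aic WDc0 by auto
  have DD: "D * D = dg n (\<lambda>j. complex_of_real ((d j)^2))" unfolding D_def dg_mult_dg
    by (simp add: power2_eq_square)
  have I1: "A * (1\<^sub>m n + V * D) = 1\<^sub>m n - D * D"
  proof -
    have "A * (1\<^sub>m n + V * D) = A * 1\<^sub>m n + A * (V * D)"
      using Ac Vc Dc by (subst mult_add_distrib_mat[of A n n], auto)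
    also have "A * (V * D) = (A * V) * D"
      by (rule assoc_mult_mat[symmetric, of A n n V n D n], insert Ac Vc Dc, auto)
    also have "A * V = (A * Ai) * (W - D)" unfolding V_def
      by (rule assoc_mult_mat[symmetric, of A n n Ai n "W - D" n], insert Ac Aic WDc0, auto)
    also have "\<dots> = W - D" using AAi Wc Dc by simp
    also have "A * 1\<^sub>m n + (W - D) * D = 1\<^sub>m n - D * D"
    proof (rule eq_matI)
      fix i j assume i: "i < dim_row (1\<^sub>m n - D * D)" and j: "j < dim_col (1\<^sub>m n - D * D)"
      hence i: "i < n" and j: "j < n" using Dc by auto
      have WDc: "W - D \<in> carrier_mat n n" using Wc Dc by (auto intro: minus_carrier_mat)
      have e1: "((W - D) * D) $$ (i,j) = (W - D) $$ (i,j) * complex_of_real (d j)"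
        unfolding D_def by (rule mult_dg_index[OF WDc[unfolded D_def] i j])
      have e2: "(W * D) $$ (i,j) = W $$ (i,j) * complex_of_real (d j)"
        unfolding D_def by (rule mult_dg_index[OF Wc i j])
      have Dij: "D $$ (i,j) = (if i = j then complex_of_real (d j) else 0)" unfolding D_def using i j by simp
      show "(A * 1\<^sub>m n + (W - D) * D) $$ (i,j) = (1\<^sub>m n - D * D) $$ (i,j)"
        unfolding A_def DD using i j Wc Dc e1 e2 Dij
        by (simp add: power2_eq_square DD algebra_simps del: index_mult_mat(1))
    qed (insert Ac Dc Wc, auto)
    finally show ?thesis .
  qed
  define g where "g k = complex_of_real (1 / (1 - (d k)^2))" for k
  have gk: "g k * (1 - complex_of_real (d k) * complex_of_real (d k)) = 1" if k: "k < n" for k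
  proof -
    have "(d k)^2 < 1" using d[OF k] by (simp add: abs_square_less_1)
    hence "1 - (d k)^2 \<noteq> 0" by simp
    hence "(1 / (1 - (d k)^2)) * (1 - (d k)^2) = 1" by simp
    hence "complex_of_real ((1 / (1 - (d k)^2)) * (1 - (d k)^2)) = 1" by simp
    moreover have "complex_of_real (1 / (1 - (d k)^2)) * (1 - complex_of_real (d k) * complex_of_real (d k))
       = complex_of_real ((1 / (1 - (d k)^2)) * (1 - (d k)^2))"
      by (simp only: of_real_mult of_real_diff of_real_1 power2_eq_square)
    ultimately show ?thesis unfolding g_def by simp
  qed
  define G where "G = dg n g"
  have Gc: "G \<in> carrier_mat n n" unfolding G_def by simp
  have adjW: "mat_adj W \<in> carrier_mat n n" using Wc by simp
  have adjD: "mat_adj D = D" unfolding D_def adj_dg by simp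
  have adjA: "mat_adj A = 1\<^sub>m n - D * mat_adj W"
    unfolding A_def using Wc Dc by (simp add: adj_minus[of _ n n] adj_mult[of W n n D n] adjD)
  have WW': "W * mat_adj W = 1\<^sub>m n" by (rule unitary_right[OF W])
  have C1: "(W - D) * G * (mat_adj W - D) = A * G * mat_adj A"
  proof (rule eq_matI)
    fix i j assume i: "i < dim_row (A * G * mat_adj A)" and j: "j < dim_col (A * G * mat_adj A)"
    hence i: "i < n" and j: "j < n" using Ac Gc by auto
    have WDc: "W - D \<in> carrier_mat n n" "mat_adj W - D \<in> carrier_mat n n" using Wc Dc by (auto intro: minus_carrier_mat)
    have "((W - D) * G * (mat_adj W - D)) $$ (i,j)
      = (\<Sum>k<n. (W $$ (i,k) - (if i = k then complex_of_real (d k) else 0)) * g k *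
                 (cnj (W $$ (j,k)) - (if k = j then complex_of_real (d k) else 0)))"
      unfolding G_def using mult3_dg_index[OF WDc i j] Wc Dc i j
      by (simp add: D_def, intro sum.cong, auto)
    also have "\<dots> = (\<Sum>k<n. ((if i = k then 1 else 0) - W $$ (i,k) * complex_of_real (d k)) * g k *
                 ((if k = j then 1 else 0) - complex_of_real (d k) * cnj (W $$ (j,k)))
                + W $$ (i,k) * cnj (W $$ (j,k)) - (if i = k \<and> k = j then 1 else 0))"
      by (rule sum.cong, simp, rule pt_identity, rule gk, simp)
    also have "\<dots> = (\<Sum>k<n. ((if i = k then 1 else 0) - W $$ (i,k) * complex_of_real (d k)) * g k *
                 ((if k = j then 1 else 0) - complex_of_real (d k) * cnj (W $$ (j,k))))
                + (\<Sum>k<n. W $$ (i,k) * cnj (W $$ (j,k))) - (\<Sum>k<n. (if i = k \<and> k = j then 1 else 0))"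
      by (simp add: sum.distrib sum_subtractf)
    also have "(\<Sum>k<n. W $$ (i,k) * cnj (W $$ (j,k))) = (W * mat_adj W) $$ (i,j)"
      using Wc i j by (simp add: index_mult_mat scalar_prod_def atLeast0LessThan)
    also have "\<dots> = (\<Sum>k<n. (if i = k \<and> k = j then 1 else 0))"
    proof -
      have e: "(\<lambda>k. if i = k \<and> k = j then (1::complex) else 0) = (\<lambda>k. if k = i then (if i = j then 1 else 0) else 0)"
        by auto
      show ?thesis unfolding e using WW' i j by (simp add: sum.delta)
    qed
    also have "(\<Sum>k<n. ((if i = k then 1 else 0) - W $$ (i,k) * complex_of_real (d k)) * g k *
                 ((if k = j then 1 else 0) - complex_of_real (d k) * cnj (W $$ (j,k))))
      = (A * G * mat_adj A) $$ (i,j)"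
    proof -
      have Aent: "A $$ (a,k) = (if a = k then 1 else 0) - W $$ (a,k) * complex_of_real (d k)"
        if a: "a < n" and k: "k < n" for a k
      proof -
        have "A $$ (a,k) = 1\<^sub>m n $$ (a,k) - (W * D) $$ (a,k)"
          unfolding A_def by (rule index_minus_mat(1), insert Wc Dc a k, auto)
        also have "(W * D) $$ (a,k) = W $$ (a,k) * complex_of_real (d k)"
          unfolding D_def by (rule mult_dg_index[OF Wc a k])
        finally show ?thesis using a k by simp
      qed
      have "(A * G * mat_adj A) $$ (i,j) = (\<Sum>k<n. A $$ (i,k) * g k * mat_adj A $$ (k,j))"
        unfolding G_def by (rule mult3_dg_index[OF Ac _ i j], insert Ac, simp)
      also have "\<dots> = (\<Sum>k<n. ((if i = k then 1 else 0) - W $$ (i,k) * complex_of_real (d k)) * g k *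
                 ((if k = j then 1 else 0) - complex_of_real (d k) * cnj (W $$ (j,k))))"
      proof (rule sum.cong[OF refl])
        fix k assume "k \<in> {..<n}" hence k: "k < n" by simp
        have "mat_adj A $$ (k,j) = cnj (A $$ (j,k))" using Ac k j by simp
        also have "\<dots> = (if k = j then 1 else 0) - complex_of_real (d k) * cnj (W $$ (j,k))"
          unfolding Aent[OF j k] by (auto simp: mult.commute)
        finally show "A $$ (i,k) * g k * mat_adj A $$ (k,j) = ((if i = k then 1 else 0) - W $$ (i,k) * complex_of_real (d k)) * g k *
                 ((if k = j then 1 else 0) - complex_of_real (d k) * cnj (W $$ (j,k)))"
          unfolding Aent[OF i k] by simp
      qed
      finally show ?thesis by simp
    qed
    finally show "((W - D) * G * (mat_adj W - D)) $$ (i,j) = (A * G * mat_adj A) $$ (i,j)" by simp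
  qed (insert Ac Gc Wc Dc, auto)
  have I2: "V * G * mat_adj V = G"
  proof -
    have adjV: "mat_adj V = (mat_adj W - D) * mat_adj Ai"
      unfolding V_def adj_mult[OF Aic WDc0] adj_minus[OF Wc Dc] adjD ..
    have WDc1: "mat_adj W - D \<in> carrier_mat n n" using Wc Dc by (auto intro: minus_carrier_mat)
    have adjAic: "mat_adj Ai \<in> carrier_mat n n" using Aic by simp
    have "V * G * mat_adj V = Ai * (W - D) * G * ((mat_adj W - D) * mat_adj Ai)"
      unfolding adjV unfolding V_def ..
    also have "\<dots> = Ai * ((W - D) * G * (mat_adj W - D)) * mat_adj Ai"
      by (rule assoc_I2(1)[OF Aic WDc0 Gc WDc1 adjAic])
    also have "\<dots> = Ai * (A * G * mat_adj A) * mat_adj Ai" unfolding C1 ..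
    also have "\<dots> = (Ai * A) * G * (mat_adj A * mat_adj Ai)"
      by (rule assoc_I2(2)[OF Aic Ac Gc _ adjAic], insert Ac, simp)
    also have "mat_adj A * mat_adj Ai = mat_adj (Ai * A)" using Ac Aic by (simp add: adj_mult[of Ai n n A n])
    finally show ?thesis using AiA Gc by simp
  qed
  define sr where "sr k = sqrt (1 / (1 - (d k)^2))" for k
  have srpos: "sr k > 0" if k: "k < n" for k
  proof -
    have "(d k)^2 < 1" using d[OF k] by (simp add: abs_square_less_1)
    thus ?thesis unfolding sr_def by simp
  qed
  define S where "S = dg n (\<lambda>k. complex_of_real (sr k))"
  define T where "T = dg n (\<lambda>k. complex_of_real (1 / sr k))"
  have Sc: "S \<in> carrier_mat n n" and Tc: "T \<in> carrier_mat n n" unfolding S_def T_def by auto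
  have TS: "T * S = 1\<^sub>m n" unfolding T_def S_def dg_mult_dg
    by (rule eq_matI, auto simp: srpos simp del: of_real_divide, simp add: srpos less_imp_neq[OF srpos, symmetric])
  have ST: "S * T = 1\<^sub>m n" unfolding T_def S_def dg_mult_dg
    by (rule eq_matI, auto simp: srpos simp del: of_real_divide, simp add: srpos less_imp_neq[OF srpos, symmetric])
  have SS: "S * S = G" unfolding S_def G_def dg_mult_dg
  proof (rule eq_matI)
    fix i j assume "i < dim_row (dg n g)" "j < dim_col (dg n g)"
    hence i: "i < n" and j: "j < n" by auto
    have "(d i)^2 < 1" using d[OF i] by (simp add: abs_square_less_1)
    hence "sr i * sr i = 1 / (1 - (d i)^2)" unfolding sr_def by simp
    hence "complex_of_real (sr i) * complex_of_real (sr i) = g i" unfolding g_def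
      by (metis of_real_mult)
    thus "dg n (\<lambda>k. complex_of_real (sr k) * complex_of_real (sr k)) $$ (i,j) = dg n g $$ (i,j)"
      using i j by (cases "i = j", simp_all)
  qed auto
  have TGT: "T * G * T = 1\<^sub>m n"
  proof -
    have "T * G * T = T * S * (S * T)" unfolding SS[symmetric] using Tc Sc by (simp add: nn)
    thus ?thesis using TS ST by (simp add: nn)
  qed
  have adjS: "mat_adj S = S" and adjT: "mat_adj T = T" unfolding S_def T_def adj_dg by simp_all
  define V' where "V' = T * V * S"
  have V'c: "V' \<in> carrier_mat n n" unfolding V'_def using Tc Vc Sc by (simp add: nn)
  have VV': "V' * mat_adj V' = 1\<^sub>m n"
  proof -
    have "mat_adj V' = S * mat_adj V * T"
      unfolding V'_def using Tc Vc Sc by (simp add: nn adj_mult[of _ n n _ n] adjS adjT)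
    hence "V' * mat_adj V' = T * (V * (S * S) * mat_adj V) * T"
      unfolding V'_def using Tc Vc Sc by (simp add: nn)
    also have "\<dots> = T * G * T" unfolding SS I2 using Tc Gc by (simp add: nn)
    finally show ?thesis using TGT by (simp add: nn)
  qed
  have V'u: "unitary_mat n V'" unfolding unitary_mat_def
    using mat_mult_left_right_inverse[OF V'c _ VV'] V'c by auto
  have DS: "D * S = S * D" unfolding D_def S_def by (rule dg_comm)
  have detV': "det (1\<^sub>m n + V' * D) = det (1\<^sub>m n + V * D)"
  proof -
    have "T * (1\<^sub>m n + V * D) * S = T * S + T * (V * D * S)"
      using Tc Sc Vc Dc by (simp add: nn mult_add_distrib_mat[of T n n] add_mult_distrib_mat[of _ n n _ S n])
    also have "V * D * S = V * S * D" using Vc Sc Dc DS by (simp add: nn)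
    also have "T * S + T * (V * S * D) = 1\<^sub>m n + V' * D" unfolding V'_def TS using Tc Vc Sc Dc by (simp add: nn)
    finally have eq: "T * (1\<^sub>m n + V * D) * S = 1\<^sub>m n + V' * D" .
    have "det (T * (1\<^sub>m n + V * D) * S) = det T * det (1\<^sub>m n + V * D) * det S"
      using Tc Sc Vc Dc by (simp add: nn det_mult[of _ n])
    also have "\<dots> = det (T * S) * det (1\<^sub>m n + V * D)" using Tc Sc by (simp add: nn det_mult[of _ n])
    finally show ?thesis unfolding eq TS by (simp add: nn)
  qed
  \<comment> \<open>apply the upper bound to -V'\<close>
  have mV'c: "- V' \<in> carrier_mat n n" using V'c by simp
  have colmV: "vn2 (col (- V') k) \<le> 1" if k: "k < n" for k
  proof -
    have "col (- V') k = - col V' k" using V'c k by (intro eq_vecI, auto)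
    hence "vn2 (col (- V') k) = vn2 (col V' k)" by (simp add: vn2_def)
    thus ?thesis using unitary_col_vn2[OF V'u k] by simp
  qed
  have dnn: "\<And>k. k < n \<Longrightarrow> 0 \<le> d k" using d by auto
  have mV: "1\<^sub>m n - (- V') * D = 1\<^sub>m n + V' * D" using V'c Dc by (intro eq_matI, auto)
  have UB: "cmod (det (1\<^sub>m n + V' * D)) \<le> (\<Prod>k<n. 1 + d k)"
    using upper_bound(1)[of "- V'" n d, OF mV'c colmV dnn, unfolded mV[unfolded D_def]] unfolding D_def .
  have detDD: "det (1\<^sub>m n - D * D) = complex_of_real (\<Prod>k<n. 1 - (d k)^2)"
  proof -
    have "1\<^sub>m n - D * D = dg n (\<lambda>k. complex_of_real (1 - (d k)^2))" unfolding DD by (rule eq_matI, auto)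
    thus ?thesis by (simp add: det_dg)
  qed
  have prodeq: "cmod (det A) * cmod (det (1\<^sub>m n + V' * D)) = (\<Prod>k<n. 1 - d k) * (\<Prod>k<n. 1 + d k)"
  proof -
    have "det A * det (1\<^sub>m n + V * D) = det (1\<^sub>m n - D * D)"
      using I1 det_mult[OF Ac, of "1\<^sub>m n + V * D"] Vc Dc by simp
    hence "cmod (det A) * cmod (det (1\<^sub>m n + V' * D)) = cmod (complex_of_real (\<Prod>k<n. 1 - (d k)^2))"
      unfolding detV' detDD by (metis norm_mult)
    also have "\<dots> = (\<Prod>k<n. 1 - (d k)^2)"
      by (subst norm_of_real, rule abs_of_nonneg, rule prod_nonneg,
          smt (verit) d lessThan_iff power_le_one)
    also have "\<dots> = (\<Prod>k<n. 1 - d k) * (\<Prod>k<n. 1 + d k)"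
      by (simp add: prod.distrib[symmetric] power2_eq_square algebra_simps)
    finally show ?thesis .
  qed
  have pp: "(\<Prod>k<n. 1 + d k) > 0" using dnn by (intro prod_pos, auto simp: add_pos_nonneg)
  have pm: "(\<Prod>k<n. 1 - d k) > 0" using d by (intro prod_pos, auto)
  show lb: "(\<Prod>k<n. 1 - d k) \<le> cmod (det (1\<^sub>m n - W * dg n (\<lambda>j. complex_of_real (d j))))"
  proof -
    have "(\<Prod>k<n. 1 - d k) * (\<Prod>k<n. 1 + d k) \<le> cmod (det A) * (\<Prod>k<n. 1 + d k)"
      unfolding prodeq[symmetric] by (rule mult_left_mono[OF UB], simp)
    thus ?thesis using pp unfolding A_def D_def by simp
  qed
  assume eq: "cmod (det (1\<^sub>m n - W * dg n (\<lambda>j. complex_of_real (d j)))) = (\<Prod>k<n. 1 - d k)"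
  hence eqA: "cmod (det A) = (\<Prod>k<n. 1 - d k)" unfolding A_def D_def .
  have "(\<Prod>k<n. 1 - d k) * cmod (det (1\<^sub>m n + V' * D)) = (\<Prod>k<n. 1 - d k) * (\<Prod>k<n. 1 + d k)"
    using prodeq unfolding eqA .
  hence "cmod (det (1\<^sub>m n + V' * D)) = (\<Prod>k<n. 1 + d k)"
    using pm by (metis mult_left_cancel less_irrefl)
  hence "cmod (det (1\<^sub>m n - (- V') * D)) = (\<Prod>k<n. 1 + d k)" unfolding mV .
  from upper_bound(2)[of "- V'" n d, OF mV'c colmV dnn this[unfolded D_def]]
  have mVD: "(- V') * D = - D" unfolding D_def .
  have VD: "V * D = D"
  proof (rule eq_matI)
    fix i j assume "i < dim_row D" "j < dim_col D"
    hence i: "i < n" and j: "j < n" using Dc by auto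
    have "(- D) $$ (i,j) = ((- V') * D) $$ (i,j)" using mVD by simp
    also have "\<dots> = (- V') $$ (i,j) * complex_of_real (d j)"
      unfolding D_def by (rule mult_dg_index[OF mV'c i j])
    also have "(- V') $$ (i,j) = - V' $$ (i,j)" using V'c i j by simp
    also have "V' $$ (i,j) = complex_of_real (1 / sr i) * V $$ (i,j) * complex_of_real (sr j)"
      unfolding V'_def T_def S_def by (rule dg_X_dg_index[OF Vc i j])
    finally have e: "(- D) $$ (i,j) = - (complex_of_real (1 / sr i) * V $$ (i,j) * complex_of_real (sr j)) * complex_of_real (d j)" .
    have mD: "(- D) $$ (i,j) = - (if i = j then complex_of_real (d j) else 0)" using i j Dc by (simp add: D_def)
    have VDij: "(V * D) $$ (i,j) = V $$ (i,j) * complex_of_real (d j)"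
      unfolding D_def by (rule mult_dg_index[OF Vc i j])
    have si: "sr i > 0" "sr j > 0" using srpos i j by auto
    show "(V * D) $$ (i,j) = D $$ (i,j)"
    proof (cases "i = j")
      case True
      have "complex_of_real (d j) = complex_of_real (1 / sr j) * V $$ (j,j) * complex_of_real (sr j) * complex_of_real (d j)"
        using e mD True by simp
      also have "\<dots> = V $$ (j,j) * complex_of_real (d j) * (complex_of_real (1 / sr j) * complex_of_real (sr j))"
        by (simp only: ac_simps)
      also have "complex_of_real (1 / sr j) * complex_of_real (sr j) = 1"
        using si by (simp del: of_real_divide add: of_real_mult[symmetric])
      finally show ?thesis using VDij True i Dc by (simp add: D_def)
    next
      case False
      have "0 = V $$ (i,j) * complex_of_real (d j) * (complex_of_real (1 / sr i) * complex_of_real (sr j))"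
        using e mD False by (simp add: ac_simps)
      moreover have "complex_of_real (1 / sr i) * complex_of_real (sr j) \<noteq> 0" using si by simp
      ultimately have "V $$ (i,j) * complex_of_real (d j) = 0" by simp
      thus ?thesis using VDij False i j Dc by (simp add: D_def)
    qed
  qed (insert Vc Dc, auto)
  have AD: "A * (1\<^sub>m n + D) = 1\<^sub>m n - D * D" using I1 unfolding VD .
  show "W * dg n (\<lambda>j. complex_of_real (d j)) = dg n (\<lambda>j. complex_of_real (d j))"
  proof (rule eq_matI)
    fix i j assume "i < dim_row (dg n (\<lambda>j. complex_of_real (d j)))" "j < dim_col (dg n (\<lambda>j. complex_of_real (d j)))"
    hence i: "i < n" and j: "j < n" by auto
    have "(A * (1\<^sub>m n + D)) $$ (i,j) = (1\<^sub>m n - D * D) $$ (i,j)" using AD by simp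
    moreover have "1\<^sub>m n + D = dg n (\<lambda>k. 1 + complex_of_real (d k))" unfolding D_def by (rule eq_matI, auto)
    ultimately have "A $$ (i,j) * (1 + complex_of_real (d j)) = (1\<^sub>m n - D * D) $$ (i,j)"
      using mult_dg_index[OF Ac i j] by simp
    hence e: "((if i = j then 1 else 0) - W $$ (i,j) * complex_of_real (d j)) * (1 + complex_of_real (d j))
        = (if i = j then 1 - complex_of_real (d j) * complex_of_real (d j) else 0)"
      unfolding A_def DD using i j Wc mult_dg_index[OF Wc i j]
      by (simp add: D_def power2_eq_square del: index_mult_mat(1))
    have nz1: "1 + complex_of_real (d j) \<noteq> 0"
    proof
      assume "1 + complex_of_real (d j) = 0"
      hence "complex_of_real (1 + d j) = 0" by simp
      hence "1 + d j = 0" by (simp only: of_real_eq_0_iff)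
      thus False using d[OF j] by simp
    qed
    have "W $$ (i,j) * complex_of_real (d j) = (if i = j then complex_of_real (d j) else 0)"
    proof (cases "i = j")
      case True
      with e have "(1 - W $$ (i,j) * complex_of_real (d j)) * (1 + complex_of_real (d j))
          = (1 - complex_of_real (d j)) * (1 + complex_of_real (d j))" by (simp add: algebra_simps)
      hence "1 - W $$ (i,j) * complex_of_real (d j) = 1 - complex_of_real (d j)" using nz1 by simp
      thus ?thesis using True by simp
    next
      case False
      with e nz1 show ?thesis by simp
    qed
    thus "(W * dg n (\<lambda>j. complex_of_real (d j))) $$ (i,j) = dg n (\<lambda>j. complex_of_real (d j)) $$ (i,j)"
      using mult_dg_index[OF Wc i j] i j by (simp del: index_mult_mat(1))
  qed (insert Wc, auto)
qed

lemma det_one_minus_char_poly: assumes A: "(A :: complex mat) \<in> carrier_mat n n"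
  shows "det (1\<^sub>m n - A) = poly (char_poly A) 1"
proof -
  have "- char_matrix A 1 = 1\<^sub>m n - A" unfolding char_matrix_def using A by (intro eq_matI, auto)
  thus ?thesis using char_poly_matrix[OF A, of 1] by simp
qed

lemma poly_lin_prod: "poly (\<Prod>k<n. [:- c k, 1:]) x = (\<Prod>k<n. x - (c k :: complex))"
  unfolding poly_prod by (intro prod.cong refl) (simp add: algebra_simps)

lemma char_poly_dg: "char_poly (dg n c) = (\<Prod>k<n. [:- c k, 1:])"
proof -
  have ut: "upper_triangular (dg n c)" by (auto simp: upper_triangular_def)
  have "char_poly (dg n c) = (\<Prod>a\<leftarrow>diag_mat (dg n c). [:- a, 1:])"
    by (rule char_poly_upper_triangular[OF dg_carrier ut])
  also have "diag_mat (dg n c) = map c [0..<n]"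
    by (rule nth_equalityI, auto simp: diag_mat_def)
  also have "(\<Prod>a\<leftarrow>map c [0..<n]. [:- a, 1:]) = (\<Prod>k<n. [:- c k, 1:])"
    by (induct n) (auto simp: lessThan_Suc mult.commute)
  finally show ?thesis .
qed

lemma real_ineq1: fixes a b q :: real
  assumes a: "0 \<le> a" and q: "0 < q" and qb: "q \<le> b"
  shows "a / b \<le> a * b / q^2"
proof -
  have b: "0 < b" using q qb by simp
  have "a * q^2 \<le> a * b^2" using a q qb by (intro mult_left_mono power_mono, auto)
  thus ?thesis using b q by (simp add: divide_simps power2_eq_square algebra_simps)
qed

lemma real_eq1: fixes a b q :: real
  assumes a: "0 < a" and q: "0 < q" and b: "0 < b"
  shows "a / b = a * b / q^2 \<longleftrightarrow> q = b"
proof -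
  have "a / b = a * b / q^2 \<longleftrightarrow> a * q^2 = a * b^2" using b q by (simp add: divide_simps power2_eq_square algebra_simps)
  also have "\<dots> \<longleftrightarrow> q^2 = b^2" using a by simp
  also have "\<dots> \<longleftrightarrow> q = b" using q b by (simp add: power2_eq_iff_nonneg)
  finally show ?thesis .
qed

lemma real_ineq2: fixes c b q :: real
  assumes c: "0 < c" and b: "0 < b" and cq: "c \<le> q"
  shows "c * b / q^2 \<le> b / c"
proof -
  have q: "0 < q" using c cq by simp
  have "c^2 \<le> q^2" using c cq by (intro power_mono, auto)
  hence "c * c * b \<le> b * q^2" using b by (simp add: power2_eq_square mult.commute mult_left_mono)
  thus ?thesis using c q by (simp add: divide_simps power2_eq_square algebra_simps)
qed

lemma real_eq2: fixes c b q :: real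
  assumes c: "0 < c" and b: "0 < b" and q: "0 < q"
  shows "c * b / q^2 = b / c \<longleftrightarrow> q = c"
proof -
  have "c * b / q^2 = b / c \<longleftrightarrow> b * c^2 = b * q^2" using c q by (simp add: divide_simps power2_eq_square algebra_simps)
  also have "\<dots> \<longleftrightarrow> c^2 = q^2" using b by simp
  also have "\<dots> \<longleftrightarrow> q = c" using q c by (auto simp: power2_eq_iff_nonneg)
  finally show ?thesis .
qed

theorem theorem3:
  fixes n :: nat and Z U :: "complex mat" and r :: "nat \<Rightarrow> real"
  assumes psd: "psd_mat n Z"
    and eig: "char_poly Z = (\<Prod>k<n. [:- complex_of_real (r k), 1:])"
    and unit: "unitary_mat n U"
    and nonsing: "det (1\<^sub>m n - U * Z) \<noteq> 0"
  shows "((\<Prod>k<n. \<bar>1 - r k\<bar> / (1 + r k))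
           \<le> cmod (det (1\<^sub>m n - Z * Z)) / (cmod (det (1\<^sub>m n - U * Z)))\<^sup>2)
    \<and> ((\<Prod>k<n. \<bar>1 - r k\<bar> / (1 + r k))
           = cmod (det (1\<^sub>m n - Z * Z)) / (cmod (det (1\<^sub>m n - U * Z)))\<^sup>2
         \<longleftrightarrow> eigenvalue Z 1 \<or>
             char_poly (U * Z) = (\<Prod>k<n. [:complex_of_real (r k), 1:]))
    \<and> (det Z \<noteq> 0 \<and> det (1\<^sub>m n - Z) \<noteq> 0 \<and> U \<noteq> - 1\<^sub>m n \<longrightarrow>
         (\<Prod>k<n. \<bar>1 - r k\<bar> / (1 + r k))
           < cmod (det (1\<^sub>m n - Z * Z)) / (cmod (det (1\<^sub>m n - U * Z)))\<^sup>2)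
    \<and> ((\<forall>k<n. 0 \<le> r k \<and> r k < 1) \<longrightarrow>
         (Re (det (1\<^sub>m n - Z * Z)) / (cmod (det (1\<^sub>m n - U * Z)))\<^sup>2
           \<le> (\<Prod>k<n. (1 + r k) / (1 - r k)))
       \<and> (Re (det (1\<^sub>m n - Z * Z)) / (cmod (det (1\<^sub>m n - U * Z)))\<^sup>2
           = (\<Prod>k<n. (1 + r k) / (1 - r k))
          \<longleftrightarrow> char_poly (U * Z) = (\<Prod>k<n. [:- complex_of_real (r k), 1:]))
       \<and> (det Z \<noteq> 0 \<and> U \<noteq> 1\<^sub>m n \<longrightarrow>
         Re (det (1\<^sub>m n - Z * Z)) / (cmod (det (1\<^sub>m n - U * Z)))\<^sup>2
           < (\<Prod>k<n. (1 + r k) / (1 - r k))))"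
proof -
  note nn = assoc_mult_mat[of _ n n _ n _ n] mult_carrier_mat[of _ n n _ n]
  have Zc: "Z \<in> carrier_mat n n" and hZ: "mat_adj Z = Z"
    and pos: "\<And>v. v \<in> carrier_vec n \<Longrightarrow> Re (conjugate v \<bullet> (Z *\<^sub>v v)) \<ge> 0"
    using psd unfolding psd_mat_def by auto
  have Uc: "U \<in> carrier_mat n n" using unit unfolding unitary_mat_def by auto
  define D where "D = dg n (\<lambda>k. complex_of_real (r k))"
  have Dc: "D \<in> carrier_mat n n" unfolding D_def by simp
  obtain V where V: "unitary_mat n V" and ZV: "Z = V * D * mat_adj V"
    using spectral[OF Zc hZ eig] unfolding D_def by auto
  have Vc: "V \<in> carrier_mat n n" using V unfolding unitary_mat_def by auto
  have aVc: "mat_adj V \<in> carrier_mat n n" using Vc by simp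
  have VV: "mat_adj V * V = 1\<^sub>m n" using V unfolding unitary_mat_def by auto
  have VV': "V * mat_adj V = 1\<^sub>m n" using unitary_right[OF V] .
  have VVX: "mat_adj V * (V * X) = X" if "X \<in> carrier_mat n n" for X
    using that Vc aVc VV by (simp add: assoc_mult_mat[symmetric, of "mat_adj V" n n V n X n])
  have VVX': "V * (mat_adj V * X) = X" if "X \<in> carrier_mat n n" for X
    using that Vc aVc VV' by (simp add: assoc_mult_mat[symmetric, of V n n "mat_adj V" n X n])
  have detconj: "det (V * X * mat_adj V) = det X" if X: "X \<in> carrier_mat n n" for X
  proof -
    have "det (V * X * mat_adj V) = det V * det X * det (mat_adj V)"
      using Vc X aVc by (simp add: det_mult[of _ n])
    also have "\<dots> = det (V * mat_adj V) * det X" using Vc aVc by (simp add: det_mult[of _ n])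
    finally show ?thesis using VV' by simp
  qed
  have DZ: "mat_adj V * Z * V = D" unfolding ZV using Vc aVc Dc VV by (simp add: nn VVX)
  have rnn: "0 \<le> r k" if k: "k < n" for k
  proof -
    define v where "v = col V k"
    have vc: "v \<in> carrier_vec n" unfolding v_def using Vc k by simp
    have rowv: "row (mat_adj V) k = conjugate v"
      unfolding v_def using Vc k by (intro eq_vecI, auto)
    have "complex_of_real (r k) = D $$ (k,k)" unfolding D_def using k by simp
    also have "\<dots> = (mat_adj V * (Z * V)) $$ (k,k)" unfolding DZ[symmetric] using Vc aVc Zc by (simp add: nn)
    also have "\<dots> = row (mat_adj V) k \<bullet> col (Z * V) k" using Vc Zc k by (simp add: index_mult_mat(1)[of k "mat_adj V"])
    also have "col (Z * V) k = Z *\<^sub>v v" unfolding v_def by (rule col_mult2[OF Zc Vc k])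
    finally have "complex_of_real (r k) = conjugate v \<bullet> (Z *\<^sub>v v)" unfolding rowv .
    hence "r k = Re (conjugate v \<bullet> (Z *\<^sub>v v))" by (metis Re_complex_of_real)
    thus ?thesis using pos[OF vc] by simp
  qed
  define W where "W = mat_adj V * U * V"
  have Wu: "unitary_mat n W" unfolding W_def by (rule unitary_mult[OF unitary_mult[OF unitary_adj[OF V] unit] V])
  have Wc: "W \<in> carrier_mat n n" using Wu unfolding unitary_mat_def by auto
  have VW: "V * W = U * V" unfolding W_def using Vc aVc Uc by (simp add: nn VVX')
  have UZ: "U * Z = V * (W * D) * mat_adj V"
  proof -
    have "U * Z = (U * V) * D * mat_adj V" unfolding ZV using Uc Vc Dc aVc by (simp add: nn)
    also have "\<dots> = (V * W) * D * mat_adj V" unfolding VW ..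
    also have "\<dots> = V * (W * D) * mat_adj V" using Vc Wc Dc aVc by (simp add: nn)
    finally show ?thesis .
  qed
  have WDc: "W * D \<in> carrier_mat n n" using Wc Dc by simp
  have oneUZ: "1\<^sub>m n - U * Z = V * (1\<^sub>m n - W * D) * mat_adj V"
  proof -
    have "V * (1\<^sub>m n - W * D) = V - V * (W * D)"
      using Vc WDc by (subst mult_minus_distrib_mat[OF Vc one_carrier_mat WDc], simp)
    hence "V * (1\<^sub>m n - W * D) * mat_adj V = (V - V * (W * D)) * mat_adj V" by simp
    also have "\<dots> = V * mat_adj V - V * (W * D) * mat_adj V"
      by (rule minus_mult_distrib_mat[OF Vc _ aVc], insert Vc WDc, simp)
    finally show ?thesis unfolding UZ VV' by simp
  qed
  have detUZ: "det (1\<^sub>m n - U * Z) = det (1\<^sub>m n - W * D)"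
    unfolding oneUZ by (rule detconj, insert WDc, auto intro: minus_carrier_mat)
  have DDc: "D * D \<in> carrier_mat n n" using Dc by simp
  have ZZ: "Z * Z = V * (D * D) * mat_adj V" unfolding ZV using Vc Dc aVc by (simp add: nn VVX)
  have oneZZ: "1\<^sub>m n - Z * Z = V * (1\<^sub>m n - D * D) * mat_adj V"
  proof -
    have "V * (1\<^sub>m n - D * D) = V - V * (D * D)"
      using Vc DDc by (subst mult_minus_distrib_mat[OF Vc one_carrier_mat DDc], simp)
    hence "V * (1\<^sub>m n - D * D) * mat_adj V = (V - V * (D * D)) * mat_adj V" by simp
    also have "\<dots> = V * mat_adj V - V * (D * D) * mat_adj V"
      by (rule minus_mult_distrib_mat[OF Vc _ aVc], insert Vc DDc, simp)
    finally show ?thesis unfolding ZZ VV' by simp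
  qed
  have detZZ: "det (1\<^sub>m n - Z * Z) = complex_of_real (\<Prod>k<n. 1 - (r k)^2)"
  proof -
    have "1\<^sub>m n - D * D = dg n (\<lambda>k. complex_of_real (1 - (r k)^2))"
      unfolding D_def dg_mult_dg by (rule eq_matI, auto simp: power2_eq_square)
    hence "det (1\<^sub>m n - D * D) = complex_of_real (\<Prod>k<n. 1 - (r k)^2)" by (simp add: det_dg)
    moreover have "det (1\<^sub>m n - Z * Z) = det (1\<^sub>m n - D * D)"
      unfolding oneZZ by (rule detconj, insert DDc, auto intro: minus_carrier_mat)
    ultimately show ?thesis by simp
  qed
  have simUZ: "similar_mat (U * Z) (W * D)"
    unfolding similar_mat_def similar_mat_wit_def Let_def UZ
    by (intro exI[of _ V] exI[of _ "mat_adj V"], insert Vc aVc WDc VV VV', auto)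
  have cpUZ: "char_poly (U * Z) = char_poly (W * D)" by (rule char_poly_similar[OF simUZ])
  have UZc: "U * Z \<in> carrier_mat n n" using Uc Zc by simp
  have ev1: "eigenvalue Z 1 \<longleftrightarrow> (\<exists>k<n. r k = 1)"
  proof -
    have "eigenvalue Z 1 \<longleftrightarrow> (\<Prod>k<n. 1 - complex_of_real (r k)) = 0"
      unfolding eigenvalue_root_char_poly[OF Zc] eig poly_lin_prod ..
    also have "\<dots> \<longleftrightarrow> (\<exists>k<n. r k = 1)"
    proof -
      have "\<And>k. (1 - complex_of_real (r k) = 0) \<longleftrightarrow> r k = 1"
        by (metis eq_iff_diff_eq_0 of_real_eq_1_iff)
      thus ?thesis by (simp add: lessThan_iff Bex_def)
    qed
    finally show ?thesis .
  qed
  have detZ1: "det (1\<^sub>m n - Z) = (\<Prod>k<n. 1 - complex_of_real (r k))"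
    unfolding det_one_minus_char_poly[OF Zc] eig poly_lin_prod ..
  define Q where "Q = cmod (det (1\<^sub>m n - U * Z))"
  have Qpos: "Q > 0" unfolding Q_def using nonsing by simp
  define Pp where "Pp = (\<Prod>k<n. 1 + r k)"
  define Pm where "Pm = (\<Prod>k<n. \<bar>1 - r k\<bar>)"
  have Pppos: "Pp > 0" unfolding Pp_def using rnn by (intro prod_pos, auto simp: add_pos_nonneg)
  have Pmnn: "Pm \<ge> 0" unfolding Pm_def by (intro prod_nonneg, auto)
  have LHS: "(\<Prod>k<n. \<bar>1 - r k\<bar> / (1 + r k)) = Pm / Pp" unfolding Pm_def Pp_def by (rule prod_dividef)
  have cZZ: "cmod (det (1\<^sub>m n - Z * Z)) = Pm * Pp"
  proof -
    have "cmod (det (1\<^sub>m n - Z * Z)) = \<bar>\<Prod>k<n. 1 - (r k)^2\<bar>" unfolding detZZ by (simp only: norm_of_real)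
    also have "\<dots> = (\<Prod>k<n. \<bar>1 - r k\<bar> * (1 + r k))" unfolding abs_prod
    proof (rule prod.cong[OF refl])
      fix k assume "k \<in> {..<n}" hence k: "k < n" by simp
      have "1 - (r k)^2 = (1 - r k) * (1 + r k)" by (simp add: power2_eq_square algebra_simps)
      thus "\<bar>1 - (r k)^2\<bar> = \<bar>1 - r k\<bar> * (1 + r k)" using rnn[OF k] by (simp add: abs_mult)
    qed
    also have "\<dots> = Pm * Pp" unfolding Pm_def Pp_def by (rule prod.distrib)
    finally show ?thesis .
  qed
  have QWD: "Q = cmod (det (1\<^sub>m n - W * dg n (\<lambda>j. complex_of_real (r j))))" unfolding Q_def detUZ D_def ..
  have colW: "\<And>k. k < n \<Longrightarrow> vn2 (col W k) \<le> 1" using unitary_col_vn2[OF Wu] by simp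
  have UB: "Q \<le> Pp" unfolding QWD Pp_def by (rule upper_bound(1)[of W n r, OF Wc colW rnn])
  have UBeq: "Q = Pp \<Longrightarrow> W * D = - D" unfolding QWD Pp_def D_def by (rule upper_bound(2)[of W n r, OF Wc colW rnn])
  have UZneg: "U * Z = - Z" if "W * D = - D"
  proof -
    have "U * Z = V * (- D) * mat_adj V" using UZ that by simp
    also have "\<dots> = - Z" unfolding ZV using Vc Dc aVc by simp
    finally show ?thesis .
  qed
  have UZpos: "U * Z = Z" if "W * D = D"
  proof -
    have "U * Z = V * D * mat_adj V" using UZ that by simp
    thus ?thesis using ZV by simp
  qed
  have cp_neg: "char_poly (U * Z) = (\<Prod>k<n. [:complex_of_real (r k), 1:]) \<longleftrightarrow> Q = Pp"
  proof
    assume "Q = Pp"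
    hence "W * D = - D" by (rule UBeq)
    moreover have "- D = dg n (\<lambda>k. - complex_of_real (r k))" unfolding D_def by (rule eq_matI, auto)
    ultimately have "char_poly (U * Z) = char_poly (dg n (\<lambda>k. - complex_of_real (r k)))" unfolding cpUZ by simp
    also have "\<dots> = (\<Prod>k<n. [:complex_of_real (r k), 1:])" unfolding char_poly_dg by simp
    finally show "char_poly (U * Z) = (\<Prod>k<n. [:complex_of_real (r k), 1:])" .
  next
    assume cp: "char_poly (U * Z) = (\<Prod>k<n. [:complex_of_real (r k), 1:])"
    have "det (1\<^sub>m n - U * Z) = poly (\<Prod>k<n. [:- (- complex_of_real (r k)), 1:]) 1"
      unfolding det_one_minus_char_poly[OF UZc] cp by simp
    also have "\<dots> = complex_of_real Pp" unfolding poly_lin_prod Pp_def by simp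
    finally show "Q = Pp" unfolding Q_def using Pppos by simp
  qed
  have RHS1: "cmod (det (1\<^sub>m n - Z * Z)) / (cmod (det (1\<^sub>m n - U * Z)))\<^sup>2 = Pm * Pp / Q^2"
    unfolding cZZ Q_def ..
  have inv_arg: "U = M" if UZM: "U * Z = M * Z" and M: "M \<in> carrier_mat n n" and dZ: "det Z \<noteq> 0" for M
  proof -
    obtain Zi where Zic: "Zi \<in> carrier_mat n n" and ZZi: "Z * Zi = 1\<^sub>m n"
      using det_inv[OF Zc dZ] by auto
    have "U = U * (Z * Zi)" using ZZi Uc by simp
    also have "\<dots> = (U * Z) * Zi" using Uc Zc Zic by simp
    also have "\<dots> = M * (Z * Zi)" unfolding UZM using M Zc Zic by simp
    finally show ?thesis using ZZi M by simp
  qed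
  have P1: "(\<Prod>k<n. \<bar>1 - r k\<bar> / (1 + r k))
           \<le> cmod (det (1\<^sub>m n - Z * Z)) / (cmod (det (1\<^sub>m n - U * Z)))\<^sup>2"
    unfolding LHS RHS1 by (rule real_ineq1[OF Pmnn Qpos UB])
  have Pmpos: "Pm > 0" if nev: "\<not> eigenvalue Z 1"
    unfolding Pm_def using nev ev1 by (intro prod_pos, auto)
  have P2: "((\<Prod>k<n. \<bar>1 - r k\<bar> / (1 + r k))
           = cmod (det (1\<^sub>m n - Z * Z)) / (cmod (det (1\<^sub>m n - U * Z)))\<^sup>2
         \<longleftrightarrow> eigenvalue Z 1 \<or>
             char_poly (U * Z) = (\<Prod>k<n. [:complex_of_real (r k), 1:]))"
  proof (cases "eigenvalue Z 1")
    case True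
    then obtain k where k: "k < n" "r k = 1" using ev1 by auto
    have "Pm = 0" unfolding Pm_def using k by (intro prod_zero, auto)
    thus ?thesis unfolding LHS RHS1 using True by simp
  next
    case False
    show ?thesis unfolding LHS RHS1 real_eq1[OF Pmpos[OF False] Qpos Pppos] cp_neg using False by simp
  qed
  have P3: "det Z \<noteq> 0 \<and> det (1\<^sub>m n - Z) \<noteq> 0 \<and> U \<noteq> - 1\<^sub>m n \<longrightarrow>
         (\<Prod>k<n. \<bar>1 - r k\<bar> / (1 + r k))
           < cmod (det (1\<^sub>m n - Z * Z)) / (cmod (det (1\<^sub>m n - U * Z)))\<^sup>2"
  proof (intro impI)
    assume a: "det Z \<noteq> 0 \<and> det (1\<^sub>m n - Z) \<noteq> 0 \<and> U \<noteq> - 1\<^sub>m n"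
    have nev: "\<not> eigenvalue Z 1"
    proof
      assume "eigenvalue Z 1"
      then obtain k where k: "k < n" "r k = 1" using ev1 by auto
      have "det (1\<^sub>m n - Z) = 0" unfolding detZ1 using k by (intro prod_zero, auto)
      thus False using a by simp
    qed
    have "Q \<noteq> Pp"
    proof
      assume "Q = Pp"
      hence "U * Z = - Z" by (intro UZneg UBeq)
      hence "U * Z = (- 1\<^sub>m n) * Z" using Zc by simp
      hence "U = - 1\<^sub>m n" by (rule inv_arg, insert a, auto)
      thus False using a by simp
    qed
    hence "\<not> (Pm / Pp = Pm * Pp / Q^2)" using real_eq1[OF Pmpos[OF nev] Qpos Pppos] by simp
    thus "(\<Prod>k<n. \<bar>1 - r k\<bar> / (1 + r k))
           < cmod (det (1\<^sub>m n - Z * Z)) / (cmod (det (1\<^sub>m n - U * Z)))\<^sup>2"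
      using P1 unfolding LHS RHS1 by simp
  qed
  have P4: "(\<forall>k<n. 0 \<le> r k \<and> r k < 1) \<longrightarrow>
         (Re (det (1\<^sub>m n - Z * Z)) / (cmod (det (1\<^sub>m n - U * Z)))\<^sup>2
           \<le> (\<Prod>k<n. (1 + r k) / (1 - r k)))
       \<and> (Re (det (1\<^sub>m n - Z * Z)) / (cmod (det (1\<^sub>m n - U * Z)))\<^sup>2
           = (\<Prod>k<n. (1 + r k) / (1 - r k))
          \<longleftrightarrow> char_poly (U * Z) = (\<Prod>k<n. [:- complex_of_real (r k), 1:]))
       \<and> (det Z \<noteq> 0 \<and> U \<noteq> 1\<^sub>m n \<longrightarrow>
         Re (det (1\<^sub>m n - Z * Z)) / (cmod (det (1\<^sub>m n - U * Z)))\<^sup>2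
           < (\<Prod>k<n. (1 + r k) / (1 - r k)))"
  proof (intro impI)
    assume hr: "\<forall>k<n. 0 \<le> r k \<and> r k < 1"
    have hr': "\<And>k. k < n \<Longrightarrow> 0 \<le> r k \<and> r k < 1" using hr by auto
    define Pn where "Pn = (\<Prod>k<n. 1 - r k)"
    have Pnpos: "Pn > 0" unfolding Pn_def using hr' by (intro prod_pos, auto)
    have ReZZ: "Re (det (1\<^sub>m n - Z * Z)) = Pn * Pp"
    proof -
      have "Re (det (1\<^sub>m n - Z * Z)) = (\<Prod>k<n. 1 - (r k)^2)" unfolding detZZ Re_complex_of_real ..
      also have "\<dots> = (\<Prod>k<n. (1 - r k) * (1 + r k))"
        by (rule prod.cong, auto simp: power2_eq_square algebra_simps)
      also have "\<dots> = Pn * Pp" unfolding Pn_def Pp_def by (rule prod.distrib)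
      finally show ?thesis .
    qed
    have RHS2: "(\<Prod>k<n. (1 + r k) / (1 - r k)) = Pp / Pn" unfolding Pp_def Pn_def by (rule prod_dividef)
    have L2: "Re (det (1\<^sub>m n - Z * Z)) / (cmod (det (1\<^sub>m n - U * Z)))\<^sup>2 = Pn * Pp / Q^2"
      unfolding ReZZ Q_def ..
    have nz': "det (1\<^sub>m n - W * dg n (\<lambda>j. complex_of_real (r j))) \<noteq> 0"
      using nonsing unfolding detUZ D_def .
    have LB: "Pn \<le> Q" unfolding QWD Pn_def by (rule lower_bound(1)[of n W r, OF Wu hr' nz'])
    have LBeq: "Q = Pn \<Longrightarrow> W * D = D" unfolding QWD Pn_def D_def
      by (rule lower_bound(2)[of n W r, OF Wu hr' nz'])
    have cp_pos: "char_poly (U * Z) = (\<Prod>k<n. [:- complex_of_real (r k), 1:]) \<longleftrightarrow> Q = Pn"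
    proof
      assume "Q = Pn"
      hence "U * Z = Z" by (intro UZpos LBeq)
      thus "char_poly (U * Z) = (\<Prod>k<n. [:- complex_of_real (r k), 1:])" using eig by simp
    next
      assume cp: "char_poly (U * Z) = (\<Prod>k<n. [:- complex_of_real (r k), 1:])"
      have "det (1\<^sub>m n - U * Z) = complex_of_real Pn"
        unfolding det_one_minus_char_poly[OF UZc] cp poly_lin_prod Pn_def by simp
      thus "Q = Pn" unfolding Q_def using Pnpos by simp
    qed
    show "(Re (det (1\<^sub>m n - Z * Z)) / (cmod (det (1\<^sub>m n - U * Z)))\<^sup>2
           \<le> (\<Prod>k<n. (1 + r k) / (1 - r k)))
       \<and> (Re (det (1\<^sub>m n - Z * Z)) / (cmod (det (1\<^sub>m n - U * Z)))\<^sup>2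
           = (\<Prod>k<n. (1 + r k) / (1 - r k))
          \<longleftrightarrow> char_poly (U * Z) = (\<Prod>k<n. [:- complex_of_real (r k), 1:]))
       \<and> (det Z \<noteq> 0 \<and> U \<noteq> 1\<^sub>m n \<longrightarrow>
         Re (det (1\<^sub>m n - Z * Z)) / (cmod (det (1\<^sub>m n - U * Z)))\<^sup>2
           < (\<Prod>k<n. (1 + r k) / (1 - r k)))"
    proof (intro conjI impI)
      show le: "Re (det (1\<^sub>m n - Z * Z)) / (cmod (det (1\<^sub>m n - U * Z)))\<^sup>2
           \<le> (\<Prod>k<n. (1 + r k) / (1 - r k))"
        unfolding L2 RHS2 by (rule real_ineq2[OF Pnpos Pppos LB])
      show "(Re (det (1\<^sub>m n - Z * Z)) / (cmod (det (1\<^sub>m n - U * Z)))\<^sup>2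
           = (\<Prod>k<n. (1 + r k) / (1 - r k))
          \<longleftrightarrow> char_poly (U * Z) = (\<Prod>k<n. [:- complex_of_real (r k), 1:]))"
        unfolding L2 RHS2 real_eq2[OF Pnpos Pppos Qpos] cp_pos ..
      assume a: "det Z \<noteq> 0 \<and> U \<noteq> 1\<^sub>m n"
      have "Q \<noteq> Pn"
      proof
        assume "Q = Pn"
        hence "U * Z = Z" by (intro UZpos LBeq)
        hence "U * Z = 1\<^sub>m n * Z" using Zc by simp
        hence "U = 1\<^sub>m n" by (rule inv_arg, insert a, auto)
        thus False using a by simp
      qed
      hence "\<not> (Pn * Pp / Q^2 = Pp / Pn)" using real_eq2[OF Pnpos Pppos Qpos] by simp
      thus "Re (det (1\<^sub>m n - Z * Z)) / (cmod (det (1\<^sub>m n - U * Z)))\<^sup>2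
           < (\<Prod>k<n. (1 + r k) / (1 - r k))"
        using le unfolding L2 RHS2 by simp
    qed
  qed
  show ?thesis using P1 P2 P3 P4 by blast
qed

end
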